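(* Let $\boldsymbol{d}=\boldsymbol{d}(n)$ be a sequence of graphical degree sequences of length $n$, with $d_1=\max_i d_i$, $M=\sum_i d_i$ and $M_2=\sum_i d_i(d_i-1)$. If $d_1^2=o(M)$ and $M_2\geq M$, then for $G$ chosen uniformly at random from $\mathcal{G}(n,\boldsymbol{d})$, $\mathbb{E}[t(G)]\sim\mu$ as $n\to\infty$, where $\mu=M_2^3/(6M^3)$.
   Context: $\mathcal{G}(n,\boldsymbol{d})$ is the set of labelled simple graphs on $[n]$ with vertex $i$ of degree $d_i$; $t(G)$ is the number of triangles in $G$. Asymptotics are as $n\to\infty$. *)

theory Defs
  imports "HOL-Analysis.Analysis" "HOL-Library.Landau_Symbols"
begin

text \<open>Simple graphs on the vertex set {0..<n} are represented by their edge sets,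
  each edge being a 2-element subset of {0..<n}.\<close>

definition all_edges :: "nat \<Rightarrow> nat set set" where
  "all_edges n = {e. \<exists>i j. i < n \<and> j < n \<and> i \<noteq> j \<and> e = {i, j}}"

definition degree :: "nat set set \<Rightarrow> nat \<Rightarrow> nat" where
  "degree E i = card {e \<in> E. i \<in> e}"

definition graphs_deg :: "nat \<Rightarrow> (nat \<Rightarrow> nat) \<Rightarrow> nat set set set" where
  "graphs_deg n d = {E. E \<subseteq> all_edges n \<and> (\<forall>i<n. degree E i = d i)}"

definition graphical :: "nat \<Rightarrow> (nat \<Rightarrow> nat) \<Rightarrow> bool" where
  "graphical n d \<longleftrightarrow> graphs_deg n d \<noteq> {}"

definition triangles :: "nat set set \<Rightarrow> nat" where
  "triangles E = card {T. \<exists>a b c. a \<noteq> b \<and> b \<noteq> c \<and> a \<noteq> c \<and> T = {a, b, c}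
      \<and> {a, b} \<in> E \<and> {b, c} \<in> E \<and> {a, c} \<in> E}"

definition expected_triangles :: "nat \<Rightarrow> (nat \<Rightarrow> nat) \<Rightarrow> real" where
  "expected_triangles n d =
     (\<Sum>E\<in>graphs_deg n d. real (triangles E)) / real (card (graphs_deg n d))"

definition dmax :: "nat \<Rightarrow> (nat \<Rightarrow> nat) \<Rightarrow> nat" where
  "dmax n d = Max (insert 0 (d ` {..<n}))"

definition M1 :: "nat \<Rightarrow> (nat \<Rightarrow> nat) \<Rightarrow> nat" where
  "M1 n d = (\<Sum>i<n. d i)"

definition M2 :: "nat \<Rightarrow> (nat \<Rightarrow> nat) \<Rightarrow> nat" where
  "M2 n d = (\<Sum>i<n. d i * (d i - 1))"

end

theory Submission
  imports Defs
begin


lemma finite_all_edges: "finite (all_edges n)"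
proof -
  have "all_edges n \<subseteq> Pow {..<n}" by (auto simp: all_edges_def)
  then show ?thesis by (rule finite_subset) simp
qed

lemma finite_graphs_deg: "finite (graphs_deg n d)"
proof -
  have "graphs_deg n d \<subseteq> Pow (all_edges n)" by (auto simp: graphs_deg_def)
  then show ?thesis by (rule finite_subset) (simp add: finite_all_edges)
qed

definition good :: "nat \<Rightarrow> nat set set \<Rightarrow> nat set set \<Rightarrow> bool" where
  "good n A B \<longleftrightarrow> A \<subseteq> all_edges n \<and> B \<subseteq> all_edges n \<and> A \<inter> B = {} \<and>
     (\<forall>i. card {e\<in>A. i \<in> e} = card {e\<in>B. i \<in> e})"

lemma switch_step:
  assumes g: "good n A B" and G: "G \<in> graphs_deg n d" and AG: "A \<subseteq> G" and BG: "B \<inter> G = {}"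
  shows "G - A \<union> B \<in> graphs_deg n d"
proof -
  have A: "A \<subseteq> all_edges n" and B: "B \<subseteq> all_edges n" and bal: "\<And>i. card {e\<in>A. i \<in> e} = card {e\<in>B. i \<in> e}"
    using g by (auto simp: good_def)
  have Gs: "G \<subseteq> all_edges n" and deg: "\<And>i. i < n \<Longrightarrow> degree G i = d i" using G by (auto simp: graphs_deg_def)
  have fG: "finite G" using Gs finite_all_edges finite_subset by blast
  have fA: "finite A" using A finite_all_edges finite_subset by blast
  have fB: "finite B" using B finite_all_edges finite_subset by blast
  have "degree (G - A \<union> B) i = degree G i" for i
  proof -
    have eq: "{e \<in> G - A \<union> B. i \<in> e} = ({e\<in>G. i\<in>e} - {e\<in>A. i\<in>e}) \<union> {e\<in>B. i\<in>e}" by auto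
    have "card ({e\<in>G. i\<in>e} - {e\<in>A. i\<in>e}) = card {e\<in>G. i\<in>e} - card {e\<in>A. i\<in>e}"
      using AG fA by (intro card_Diff_subset) auto
    moreover have "card {e\<in>A. i\<in>e} \<le> card {e\<in>G. i\<in>e}" using AG fG by (intro card_mono) auto
    moreover have "card (({e\<in>G. i\<in>e} - {e\<in>A. i\<in>e}) \<union> {e\<in>B. i\<in>e}) =
        card ({e\<in>G. i\<in>e} - {e\<in>A. i\<in>e}) + card {e\<in>B. i\<in>e}"
      using BG fG fB by (intro card_Un_disjoint) auto
    ultimately show ?thesis unfolding degree_def eq using bal[of i] by simp
  qed
  then show ?thesis using Gs A B deg by (auto simp: graphs_deg_def)
qed

lemma switching:
  assumes g: "good n A B"
  shows "card {G\<in>graphs_deg n d. A \<subseteq> G \<and> B \<inter> G = {}} = card {G\<in>graphs_deg n d. B \<subseteq> G \<and> A \<inter> G = {}}"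
proof -
  have g': "good n B A" using g by (auto simp: good_def)
  have AB: "A \<inter> B = {}" using g by (auto simp: good_def)
  show ?thesis
  proof (rule bij_betw_same_card[of "\<lambda>G. G - A \<union> B"], rule bij_betw_byWitness[where f' = "\<lambda>G. G - B \<union> A"])
    show "\<forall>G\<in>{G \<in> graphs_deg n d. A \<subseteq> G \<and> B \<inter> G = {}}. G - A \<union> B - B \<union> A = G" using AB by auto
    show "\<forall>G\<in>{G \<in> graphs_deg n d. B \<subseteq> G \<and> A \<inter> G = {}}. G - B \<union> A - A \<union> B = G" using AB by auto
    show "(\<lambda>G. G - A \<union> B) ` {G \<in> graphs_deg n d. A \<subseteq> G \<and> B \<inter> G = {}} \<subseteq> {G \<in> graphs_deg n d. B \<subseteq> G \<and> A \<inter> G = {}}"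
      using switch_step[OF g] AB by auto
    show "(\<lambda>G. G - B \<union> A) ` {G \<in> graphs_deg n d. B \<subseteq> G \<and> A \<inter> G = {}} \<subseteq> {G \<in> graphs_deg n d. A \<subseteq> G \<and> B \<inter> G = {}}"
      using switch_step[OF g'] AB by auto
  qed
qed

lemma card_edges_list:
  assumes "distinct (map (\<lambda>(u,v). {u,v}) ps)" "\<forall>(u,v)\<in>set ps. u \<noteq> v"
  shows "card {e \<in> set (map (\<lambda>(u,v). {u,v}) ps). i \<in> e} = (\<Sum>(u,v)\<leftarrow>ps. of_bool (i = u) + of_bool (i = v))"
  using assms
proof (induction ps)
  case Nil then show ?case by simp
next
  case (Cons p ps)
  obtain u v where p: "p = (u,v)" by (cases p)
  let ?S = "set (map (\<lambda>(u,v). {u,v}) ps)"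
  have nin: "{u,v} \<notin> ?S" using Cons.prems p by auto
  have uv: "u \<noteq> v" using Cons.prems p by auto
  have eq: "{e \<in> insert {u,v} ?S. i \<in> e} = (if i \<in> {u,v} then insert {u,v} {e\<in>?S. i\<in>e} else {e\<in>?S. i\<in>e})"
    by auto
  have "card {e \<in> insert {u,v} ?S. i \<in> e} = of_bool (i = u) + of_bool (i = v) + card {e\<in>?S. i\<in>e}"
    unfolding eq using nin uv by auto
  then show ?case using Cons p by simp
qed

lemma edge_in: "u < n \<Longrightarrow> v < n \<Longrightarrow> u \<noteq> v \<Longrightarrow> {u,v} \<in> all_edges n"
  unfolding all_edges_def by blast

lemma good_intro:
  fixes ps qs :: "(nat \<times> nat) list"
  assumes "\<forall>(u,v)\<in>set ps \<union> set qs. u < n \<and> v < n \<and> u \<noteq> v"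
    and "distinct (map (\<lambda>(u,v). {u,v}) ps)" "distinct (map (\<lambda>(u,v). {u,v}) qs)"
    and "set (map (\<lambda>(u,v). {u,v}) ps) \<inter> set (map (\<lambda>(u,v). {u,v}) qs) = {}"
    and "\<And>i. (\<Sum>(u,v)\<leftarrow>ps. of_bool (i = u) + of_bool (i = v) :: nat) = (\<Sum>(u,v)\<leftarrow>qs. of_bool (i = u) + of_bool (i = v))"
  shows "good n (set (map (\<lambda>(u,v). {u,v}) ps)) (set (map (\<lambda>(u,v). {u,v}) qs))"
  unfolding good_def
proof (intro conjI allI)
  show "set (map (\<lambda>(u,v). {u,v}) ps) \<subseteq> all_edges n" "set (map (\<lambda>(u,v). {u,v}) qs) \<subseteq> all_edges n"
    using assms(1) by (auto intro!: edge_in)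
  show "set (map (\<lambda>(u,v). {u,v}) ps) \<inter> set (map (\<lambda>(u,v). {u,v}) qs) = {}" by fact
  fix i
  have np: "\<forall>(u,v)\<in>set ps. u \<noteq> v" and nq: "\<forall>(u,v)\<in>set qs. u \<noteq> v" using assms(1) by auto
  show "card {e \<in> set (map (\<lambda>(u,v). {u,v}) ps). i \<in> e} = card {e \<in> set (map (\<lambda>(u,v). {u,v}) qs). i \<in> e}"
    using card_edges_list[OF assms(2) np] card_edges_list[OF assms(3) nq] assms(5) by simp
qed


locale gd = fixes n :: nat and d :: "nat \<Rightarrow> nat"
begin

abbreviation "V \<equiv> {..<n}"
abbreviation "Om \<equiv> graphs_deg n d"
definition adj :: "nat set set \<Rightarrow> nat \<Rightarrow> nat \<Rightarrow> bool" where "adj G x y \<longleftrightarrow> {x,y} \<in> G"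
definition "Dm = real (dmax n d)"
definition "Mm = real (M1 n d)"
definition "Qm = real (M2 n d)"
definition "S2 = (\<Sum>v\<in>V. real (d v) ^ 2)"

lemma adj_sym: "adj G x y = adj G y x"
  by (simp add: adj_def insert_commute)

lemma adj_props: assumes "G \<in> Om" "adj G x y" shows "x < n" "y < n" "x \<noteq> y"
  using assms by (auto simp: adj_def graphs_deg_def all_edges_def doubleton_eq_iff)

lemma adj_irrefl: "G \<in> Om \<Longrightarrow> \<not> adj G x x"
  using adj_props by blast

lemma deg_le: "v < n \<Longrightarrow> real (d v) \<le> Dm"
  unfolding Dm_def dmax_def by (auto intro: Max_ge)

lemma Dm_nonneg: "0 \<le> Dm" unfolding Dm_def by simp

lemma sum_d: "(\<Sum>v\<in>V. real (d v)) = Mm"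
  unfolding Mm_def M1_def by simp

lemma fd_eq: "real (d v * (d v - 1)) = real (d v) * (real (d v) - 1)"
  by (cases "d v") (simp_all add: algebra_simps)

lemma sum_fd: "(\<Sum>v\<in>V. real (d v) * (real (d v) - 1)) = Qm"
  unfolding Qm_def M2_def of_nat_sum by (intro sum.cong refl fd_eq[symmetric])

lemma S2_eq: "S2 = Qm + Mm"
  unfolding S2_def sum_fd[symmetric] sum_d[symmetric] sum.distrib[symmetric]
  by (intro sum.cong) (auto simp: power2_eq_square algebra_simps)

lemma fd_nonneg: "0 \<le> real (d v) * (real (d v) - 1)"
  by (cases "d v") auto

lemma sum_of_bool_card: "finite A \<Longrightarrow> (\<Sum>x\<in>A. of_bool (P x) :: real) = real (card {x\<in>A. P x})"
proof -
  assume "finite A"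
  have "(\<Sum>x\<in>A. of_bool (P x) :: real) = (\<Sum>x\<in>{x\<in>A. P x}. 1)"
    using \<open>finite A\<close> by (simp add: sum.inter_filter[symmetric] of_bool_def)
  then show ?thesis by simp
qed

lemma card_nb: assumes G: "G \<in> Om" and x: "x < n"
  shows "card {y\<in>V. adj G x y} = d x"
proof -
  have Gs: "G \<subseteq> all_edges n" and deg: "degree G x = d x" using G x by (auto simp: graphs_deg_def)
  have "bij_betw (\<lambda>y. {x,y}) {y\<in>V. adj G x y} {e\<in>G. x \<in> e}"
  proof (rule bij_betwI')
    show "\<And>y y'. y \<in> {y\<in>V. adj G x y} \<Longrightarrow> y' \<in> {y\<in>V. adj G x y} \<Longrightarrow> ({x, y} = {x, y'}) = (y = y')"
      by (auto simp: doubleton_eq_iff)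
    show "\<And>y. y \<in> {y\<in>V. adj G x y} \<Longrightarrow> {x, y} \<in> {e \<in> G. x \<in> e}" by (auto simp: adj_def)
    fix e assume e: "e \<in> {e \<in> G. x \<in> e}"
    then obtain i j where ij: "i < n" "j < n" "i \<noteq> j" "e = {i,j}" using Gs by (auto simp: all_edges_def)
    show "\<exists>y\<in>{y\<in>V. adj G x y}. e = {x, y}"
    proof (cases "x = i")
      case True then show ?thesis using e ij by (auto simp: adj_def)
    next
      case False then have "x = j" using e ij by auto
      then show ?thesis using e ij by (intro bexI[of _ i]) (auto simp: adj_def insert_commute)
    qed
  qed
  then have "card {y\<in>V. adj G x y} = card {e\<in>G. x \<in> e}" by (rule bij_betw_same_card)
  then show ?thesis using deg by (simp add: degree_def)
qed

lemma nb_sum: assumes "G \<in> Om" "x < n" shows "(\<Sum>y\<in>V. of_bool (adj G x y)) = real (d x)"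
proof -
  have "(\<Sum>y\<in>V. of_bool (adj G x y) :: real) = real (card {y\<in>V. adj G x y})"
    by (rule sum_of_bool_card) simp
  then show ?thesis using card_nb[OF assms] by simp
qed

lemma nb_sum': assumes "G \<in> Om" "x < n" shows "(\<Sum>y\<in>V. of_bool (adj G y x)) = real (d x)"
  using nb_sum[OF assms] by (simp add: adj_sym)

lemma nb_sum_gen: assumes "G \<in> Om" shows "(\<Sum>y\<in>V. of_bool (adj G x y)) = (if x < n then real (d x) else 0)"
proof (cases "x < n")
  case True then show ?thesis using nb_sum[OF assms] by simp
next
  case False
  then have "\<And>y. \<not> adj G x y" using adj_props[OF assms] by blast
  then show ?thesis using False by simp
qed

lemma pair_sum: assumes G: "G \<in> Om" and x: "x < n"
  shows "(\<Sum>y\<in>V. \<Sum>z\<in>V. of_bool (adj G x y \<and> adj G x z \<and> y \<noteq> z)) = real (d x) * (real (d x) - 1)"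
proof -
  have "(\<Sum>z\<in>V. of_bool (adj G x y \<and> adj G x z \<and> y \<noteq> z)) = of_bool (adj G x y) * (real (d x) - 1)" if y: "y < n" for y
  proof -
    have "(\<Sum>z\<in>V. of_bool (adj G x y \<and> adj G x z \<and> y \<noteq> z)) =
        (\<Sum>z\<in>V. of_bool (adj G x y) * (of_bool (adj G x z) - of_bool (z = y)) :: real)"
      by (intro sum.cong) auto
    also have "\<dots> = of_bool (adj G x y) * ((\<Sum>z\<in>V. of_bool (adj G x z)) - (\<Sum>z\<in>V. of_bool (z = y)))"
      by (simp add: sum_distrib_left sum_subtractf)
    also have "(\<Sum>z\<in>V. of_bool (z = y) :: real) = 1" using y by (simp add: sum.delta)
    finally show ?thesis using nb_sum[OF G x] by simp
  qed
  then have "(\<Sum>y\<in>V. \<Sum>z\<in>V. of_bool (adj G x y \<and> adj G x z \<and> y \<noteq> z)) =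
      (\<Sum>y\<in>V. of_bool (adj G x y) * (real (d x) - 1))" by (intro sum.cong) auto
  also have "\<dots> = real (d x) * (real (d x) - 1)" using nb_sum[OF G x] by (simp add: sum_distrib_right)
  finally show ?thesis .
qed

lemma M_sum: assumes G: "G \<in> Om" shows "(\<Sum>x\<in>V. \<Sum>y\<in>V. of_bool (adj G x y)) = Mm"
  using nb_sum[OF G] sum_d by simp

end


declare sum_of_bool_eq[simp del]

context gd begin

lemma bad_count:
  assumes G: "G \<in> Om" and X: "finite X" and Y: "finite Y"
  shows "(\<Sum>u\<in>V. \<Sum>v\<in>V. of_bool (adj G u v \<and> (u \<in> X \<or> v \<in> Y))) \<le> (real (card X) + real (card Y)) * Dm"
proof -
  have "(\<Sum>u\<in>V. \<Sum>v\<in>V. of_bool (adj G u v \<and> (u \<in> X \<or> v \<in> Y)))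
     \<le> (\<Sum>u\<in>V. \<Sum>v\<in>V. of_bool (u \<in> X) * of_bool (adj G u v) + of_bool (v \<in> Y) * of_bool (adj G u v) :: real)"
    by (intro sum_mono) auto
  also have "\<dots> = (\<Sum>u\<in>V. of_bool (u \<in> X) * (\<Sum>v\<in>V. of_bool (adj G u v))) + (\<Sum>v\<in>V. of_bool (v \<in> Y) * (\<Sum>u\<in>V. of_bool (adj G u v)))"
  proof -
    have e1: "(\<Sum>u\<in>V. \<Sum>v\<in>V. of_bool (u \<in> X) * of_bool (adj G u v) :: real) = (\<Sum>u\<in>V. of_bool (u \<in> X) * (\<Sum>v\<in>V. of_bool (adj G u v)))"
      by (simp add: sum_distrib_left)
    have e2: "(\<Sum>u\<in>V. \<Sum>v\<in>V. of_bool (v \<in> Y) * of_bool (adj G u v) :: real) = (\<Sum>v\<in>V. of_bool (v \<in> Y) * (\<Sum>u\<in>V. of_bool (adj G u v)))"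
      by (subst sum.swap) (simp add: sum_distrib_left)
    show ?thesis by (simp only: sum.distrib e1 e2)
  qed
  also have "\<dots> = (\<Sum>u\<in>V. of_bool (u \<in> X) * real (d u)) + (\<Sum>v\<in>V. of_bool (v \<in> Y) * real (d v))"
    using nb_sum[OF G] nb_sum'[OF G] by simp
  also have "\<dots> \<le> (\<Sum>u\<in>V. of_bool (u \<in> X) * Dm) + (\<Sum>v\<in>V. of_bool (v \<in> Y) * Dm)"
    by (intro add_mono sum_mono mult_left_mono) (auto simp: deg_le)
  also have "\<dots> = real (card {u\<in>V. u\<in>X}) * Dm + real (card {u\<in>V. u\<in>Y}) * Dm"
    by (simp add: sum_distrib_right[symmetric] sum_of_bool_card)
  also have "\<dots> \<le> real (card X) * Dm + real (card Y) * Dm"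
    using X Y by (intro add_mono mult_right_mono Dm_nonneg) (auto intro: card_mono)
  finally show ?thesis by (simp add: algebra_simps)
qed

lemma good_count:
  assumes G: "G \<in> Om" and X: "finite X" and Y: "finite Y"
  shows "(\<Sum>u\<in>V. \<Sum>v\<in>V. of_bool (adj G u v \<and> \<not> (u \<in> X \<or> v \<in> Y))) \<ge> Mm - (real (card X) + real (card Y)) * Dm"
proof -
  have "(\<Sum>u\<in>V. \<Sum>v\<in>V. of_bool (adj G u v \<and> \<not> (u \<in> X \<or> v \<in> Y))) =
     (\<Sum>u\<in>V. \<Sum>v\<in>V. of_bool (adj G u v)) - (\<Sum>u\<in>V. \<Sum>v\<in>V. of_bool (adj G u v \<and> (u \<in> X \<or> v \<in> Y)) :: real)"
  proof -
    have "\<And>u v. of_bool (adj G u v \<and> \<not> (u \<in> X \<or> v \<in> Y)) = (of_bool (adj G u v) - of_bool (adj G u v \<and> (u \<in> X \<or> v \<in> Y)) :: real)"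
      by simp
    then have "(\<Sum>u\<in>V. \<Sum>v\<in>V. of_bool (adj G u v \<and> \<not> (u \<in> X \<or> v \<in> Y))) =
       (\<Sum>u\<in>V. \<Sum>v\<in>V. (of_bool (adj G u v) - of_bool (adj G u v \<and> (u \<in> X \<or> v \<in> Y)) :: real))" by simp
    then show ?thesis by (simp add: sum_subtractf)
  qed
  then show ?thesis using bad_count[OF assms] M_sum[OF G] by simp
qed

lemma card_nbset: assumes "G \<in> Om" "a < n" shows "card {y. adj G a y} = d a"
proof -
  have "{y. adj G a y} = {y\<in>V. adj G a y}" using adj_props[OF assms(1)] by auto
  then show ?thesis using card_nb[OF assms] by simp
qed

lemma finite_nbset: assumes "G \<in> Om" shows "finite {y. adj G a y}"
proof -
  have "{y. adj G a y} \<subseteq> V" using adj_props[OF assms(1)] by auto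
  then show ?thesis by (rule finite_subset) simp
qed

lemma card_FX: assumes "G \<in> Om" "a < n" "finite F"
  shows "real (card (F \<union> {y. adj G a y})) \<le> real (card F) + Dm"
proof -
  have "card (F \<union> {y. adj G a y}) \<le> card F + card {y. adj G a y}" by (rule card_Un_le)
  then show ?thesis using card_nbset[OF assms(1,2)] deg_le[OF assms(2)] by linarith
qed

definition "Nab a b = (\<Sum>G\<in>Om. of_bool (adj G a b) :: real)"

lemma card_sum: "real (card {G\<in>Om. P G}) = (\<Sum>G\<in>Om. of_bool (P G))"
  by (rule sum_of_bool_card[symmetric]) (rule finite_graphs_deg)

lemma cardsum_pull: "of_bool Q * real (card {G\<in>Om. P G}) = (\<Sum>G\<in>Om. of_bool (Q \<and> P G))"
  by (simp add: card_sum sum_distrib_left del: sum_of_bool_eq)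

lemma swap3: "(\<Sum>u\<in>A. \<Sum>v\<in>B. \<Sum>G\<in>C. f u v G) = (\<Sum>G\<in>C. \<Sum>u\<in>A. \<Sum>v\<in>B. f u v G)"
proof -
  have "(\<Sum>u\<in>A. \<Sum>v\<in>B. \<Sum>G\<in>C. f u v G) = (\<Sum>u\<in>A. \<Sum>G\<in>C. \<Sum>v\<in>B. f u v G)"
    by (intro sum.cong refl sum.swap)
  also have "\<dots> = (\<Sum>G\<in>C. \<Sum>u\<in>A. \<Sum>v\<in>B. f u v G)" by (rule sum.swap)
  finally show ?thesis .
qed

lemma edge_prob:
  assumes a: "a < n" and b: "b < n" and ab: "a \<noteq> b"
  shows "Nab a b * (Mm - (4 + 2 * Dm) * Dm) \<le> real (card Om) * real (d a) * real (d b)"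
proof -
  define eA where "eA u v = {{a,b},{u,v}}" for u v :: nat
  define eB where "eB u v = {{a,u},{b,v}}" for u v :: nat
  define g2 where "g2 u v = good n (eA u v) (eB u v)" for u v
  have sw: "(\<Sum>u\<in>V. \<Sum>v\<in>V. of_bool (g2 u v) * real (card {G\<in>Om. eA u v \<subseteq> G \<and> eB u v \<inter> G = {}}))
     = (\<Sum>u\<in>V. \<Sum>v\<in>V. of_bool (g2 u v) * real (card {G\<in>Om. eB u v \<subseteq> G \<and> eA u v \<inter> G = {}}))"
  proof (intro sum.cong refl)
    fix u v
    show "of_bool (g2 u v) * real (card {G\<in>Om. eA u v \<subseteq> G \<and> eB u v \<inter> G = {}}) =
          of_bool (g2 u v) * real (card {G\<in>Om. eB u v \<subseteq> G \<and> eA u v \<inter> G = {}})"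
      using switching[of n "eA u v" "eB u v" d] unfolding g2_def by (cases "good n (eA u v) (eB u v)") simp_all
  qed
  have L: "(\<Sum>u\<in>V. \<Sum>v\<in>V. of_bool (g2 u v) * real (card {G\<in>Om. eA u v \<subseteq> G \<and> eB u v \<inter> G = {}}))
     = (\<Sum>G\<in>Om. \<Sum>u\<in>V. \<Sum>v\<in>V. of_bool (g2 u v \<and> eA u v \<subseteq> G \<and> eB u v \<inter> G = {}))"
    by (simp only: cardsum_pull) (rule swap3)
  have R: "(\<Sum>u\<in>V. \<Sum>v\<in>V. of_bool (g2 u v) * real (card {G\<in>Om. eB u v \<subseteq> G \<and> eA u v \<inter> G = {}}))
     = (\<Sum>G\<in>Om. \<Sum>u\<in>V. \<Sum>v\<in>V. of_bool (g2 u v \<and> eB u v \<subseteq> G \<and> eA u v \<inter> G = {}))"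
    by (simp only: cardsum_pull) (rule swap3)
  have low: "of_bool (adj G a b) * (Mm - (4 + 2 * Dm) * Dm) \<le> (\<Sum>u\<in>V. \<Sum>v\<in>V. of_bool (g2 u v \<and> eA u v \<subseteq> G \<and> eB u v \<inter> G = {}))"
    if G: "G \<in> Om" for G
  proof (cases "adj G a b")
    case False then show ?thesis by (simp add: sum_nonneg)
  next
    case True
    define X where "X = {a,b} \<union> {y. adj G a y}"
    define Y where "Y = {a,b} \<union> {y. adj G b y}"
    have fX: "finite X" "finite Y" unfolding X_def Y_def using finite_nbset[OF G] by auto
    have c2: "card {a,b} = 2" using ab by simp
    have cX: "real (card X) \<le> 2 + Dm" unfolding X_def using card_FX[OF G a, of "{a,b}"] c2 by simp
    have cY: "real (card Y) \<le> 2 + Dm" unfolding Y_def using card_FX[OF G b, of "{a,b}"] c2 by simp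
    have imp: "g2 u v \<and> eA u v \<subseteq> G \<and> eB u v \<inter> G = {}" if uv: "adj G u v" "u \<notin> X" "v \<notin> Y" for u v
    proof -
      have u: "u < n" "v < n" "u \<noteq> v" using adj_props[OF G uv(1)] by auto
      have d1: "u \<noteq> a" "u \<noteq> b" "v \<noteq> a" "v \<noteq> b" "\<not> adj G a u" "\<not> adj G b v" using uv by (auto simp: X_def Y_def)
      have "good n (set (map (\<lambda>(u,v). {u,v}) [(a,b),(u,v)])) (set (map (\<lambda>(u,v). {u,v}) [(a,u),(b,v)]))"
      proof (rule good_intro)
        show "\<forall>(u, v)\<in>set [(a, b), (u, v)] \<union> set [(a, u), (b, v)]. u < n \<and> v < n \<and> u \<noteq> v"
          using a b ab u d1 by simp
        show "distinct (map (\<lambda>(u, v). {u, v}) [(a, b), (u, v)])" using ab u d1 by (simp add: doubleton_eq_iff)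
        show "distinct (map (\<lambda>(u, v). {u, v}) [(a, u), (b, v)])" using ab u d1 by (simp add: doubleton_eq_iff)
        show "set (map (\<lambda>(u, v). {u, v}) [(a, b), (u, v)]) \<inter> set (map (\<lambda>(u, v). {u, v}) [(a, u), (b, v)]) = {}"
          using ab u d1 by (simp add: doubleton_eq_iff)
        show "\<And>i. (\<Sum>(u, v)\<leftarrow>[(a, b), (u, v)]. of_bool (i = u) + of_bool (i = v) :: nat) =
               (\<Sum>(u, v)\<leftarrow>[(a, u), (b, v)]. of_bool (i = u) + of_bool (i = v))"
          by (simp only: list.map sum_list.Cons sum_list.Nil prod.case add_ac)
      qed
      then have "g2 u v" by (simp add: g2_def eA_def eB_def)
      moreover have "eA u v \<subseteq> G" using True uv(1) by (simp add: eA_def adj_def)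
      moreover have "eB u v \<inter> G = {}" using d1 by (auto simp: eB_def adj_def)
      ultimately show ?thesis by blast
    qed
    have "Mm - (4 + 2 * Dm) * Dm \<le> Mm - (real (card X) + real (card Y)) * Dm"
      using cX cY Dm_nonneg by (intro diff_left_mono mult_right_mono) auto
    also have "\<dots> \<le> (\<Sum>u\<in>V. \<Sum>v\<in>V. of_bool (adj G u v \<and> \<not> (u \<in> X \<or> v \<in> Y)))"
      by (rule good_count[OF G fX])
    also have "\<dots> \<le> (\<Sum>u\<in>V. \<Sum>v\<in>V. of_bool (g2 u v \<and> eA u v \<subseteq> G \<and> eB u v \<inter> G = {}))"
      by (intro sum_mono) (use imp in auto)
    finally show ?thesis using True by simp
  qed
  have up: "(\<Sum>u\<in>V. \<Sum>v\<in>V. of_bool (g2 u v \<and> eB u v \<subseteq> G \<and> eA u v \<inter> G = {})) \<le> real (d a) * real (d b)"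
    if G: "G \<in> Om" for G
  proof -
    have "(\<Sum>u\<in>V. \<Sum>v\<in>V. of_bool (g2 u v \<and> eB u v \<subseteq> G \<and> eA u v \<inter> G = {}))
       \<le> (\<Sum>u\<in>V. \<Sum>v\<in>V. of_bool (adj G a u) * of_bool (adj G b v) :: real)"
      by (intro sum_mono) (auto simp: eB_def adj_def)
    also have "\<dots> = real (d a) * real (d b)"
      using nb_sum[OF G a] nb_sum[OF G b] by (simp add: sum_distrib_left[symmetric] sum_distrib_right[symmetric])
    finally show ?thesis .
  qed
  have "Nab a b * (Mm - (4 + 2 * Dm) * Dm) = (\<Sum>G\<in>Om. of_bool (adj G a b) * (Mm - (4 + 2 * Dm) * Dm))"
    by (simp add: Nab_def sum_distrib_right)
  also have "\<dots> \<le> (\<Sum>G\<in>Om. \<Sum>u\<in>V. \<Sum>v\<in>V. of_bool (g2 u v \<and> eA u v \<subseteq> G \<and> eB u v \<inter> G = {}))"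
    by (intro sum_mono low)
  also have "\<dots> = (\<Sum>G\<in>Om. \<Sum>u\<in>V. \<Sum>v\<in>V. of_bool (g2 u v \<and> eB u v \<subseteq> G \<and> eA u v \<inter> G = {}))"
    using sw L R by simp
  also have "\<dots> \<le> (\<Sum>G\<in>Om. real (d a) * real (d b))"
    by (intro sum_mono up)
  finally show ?thesis by simp
qed

end


definition eset :: "(nat \<times> nat) list \<Rightarrow> nat set set" where
  "eset ps = set (map (\<lambda>(u,v). {u,v}) ps)"

definition TA :: "nat \<Rightarrow> nat \<Rightarrow> nat \<Rightarrow> nat \<Rightarrow> nat \<Rightarrow> nat \<Rightarrow> nat \<Rightarrow> nat \<Rightarrow> nat \<Rightarrow> nat set set" where
  "TA a b c x1 y1 y2 z1 z2 x2 = eset [(a,b),(b,c),(c,a),(x1,y1),(y2,z1),(z2,x2)]"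
definition TB :: "nat \<Rightarrow> nat \<Rightarrow> nat \<Rightarrow> nat \<Rightarrow> nat \<Rightarrow> nat \<Rightarrow> nat \<Rightarrow> nat \<Rightarrow> nat \<Rightarrow> nat set set" where
  "TB a b c x1 y1 y2 z1 z2 x2 = eset [(a,x1),(b,y1),(b,y2),(c,z1),(c,z2),(a,x2)]"

definition Good :: "nat \<Rightarrow> nat \<Rightarrow> nat \<Rightarrow> nat \<Rightarrow> nat \<Rightarrow> nat \<Rightarrow> nat \<Rightarrow> nat \<Rightarrow> nat \<Rightarrow> nat \<Rightarrow> bool" where
  "Good n a b c x1 y1 y2 z1 z2 x2 \<longleftrightarrow> distinct [a,b,c] \<and> x1 \<noteq> x2 \<and> y1 \<noteq> y2 \<and> z1 \<noteq> z2 \<and>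
     good n (TA a b c x1 y1 y2 z1 z2 x2) (TB a b c x1 y1 y2 z1 z2 x2)"

lemma bal_T: "(\<Sum>(u, v)\<leftarrow>[(a,b),(b,c),(c,a),(x1,y1),(y2,z1),(z2,x2)]. of_bool (i = u) + of_bool (i = v) :: nat) =
         (\<Sum>(u, v)\<leftarrow>[(a,x1),(b,y1),(b,y2),(c,z1),(c,z2),(a,x2)]. of_bool (i = u) + of_bool (i = v))"
  by (simp only: list.map sum_list.Cons sum_list.Nil prod.case add_ac)

lemma Good_distinct:
  assumes "distinct [a,b,c,x1,y1,y2,z1,z2,x2]" "a < n" "b < n" "c < n" "x1 < n" "y1 < n" "y2 < n" "z1 < n" "z2 < n" "x2 < n"
  shows "Good n a b c x1 y1 y2 z1 z2 x2"
  unfolding Good_def TA_def TB_def eset_def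
proof (intro conjI)
  show "good n (set (map (\<lambda>(u, v). {u, v}) [(a,b),(b,c),(c,a),(x1,y1),(y2,z1),(z2,x2)]))
     (set (map (\<lambda>(u, v). {u, v}) [(a,x1),(b,y1),(b,y2),(c,z1),(c,z2),(a,x2)]))"
  proof (rule good_intro)
    show "\<forall>(u, v)\<in>set [(a,b),(b,c),(c,a),(x1,y1),(y2,z1),(z2,x2)] \<union> set [(a,x1),(b,y1),(b,y2),(c,z1),(c,z2),(a,x2)]. u < n \<and> v < n \<and> u \<noteq> v"
      using assms by auto
    show "distinct (map (\<lambda>(u, v). {u, v}) [(a,b),(b,c),(c,a),(x1,y1),(y2,z1),(z2,x2)])" using assms(1) by (auto simp: doubleton_eq_iff)
    show "distinct (map (\<lambda>(u, v). {u, v}) [(a,x1),(b,y1),(b,y2),(c,z1),(c,z2),(a,x2)])" using assms(1) by (auto simp: doubleton_eq_iff)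
    show "set (map (\<lambda>(u, v). {u, v}) [(a,b),(b,c),(c,a),(x1,y1),(y2,z1),(z2,x2)]) \<inter> set (map (\<lambda>(u, v). {u, v}) [(a,x1),(b,y1),(b,y2),(c,z1),(c,z2),(a,x2)]) = {}"
      using assms(1) by (auto simp: doubleton_eq_iff)
  qed (rule bal_T)
qed (use assms(1) in auto)


lemma fact3: "(\<Sum>x1\<in>V. \<Sum>y1\<in>V. \<Sum>y2\<in>V. \<Sum>z1\<in>V. \<Sum>z2\<in>V. \<Sum>x2\<in>V. (f x1 y1 * g y2 z1 * h z2 x2::real))
  = (\<Sum>x1\<in>V. \<Sum>y1\<in>V. f x1 y1) * (\<Sum>y2\<in>V. \<Sum>z1\<in>V. g y2 z1) * (\<Sum>z2\<in>V. \<Sum>x2\<in>V. h z2 x2)"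
  by (simp only: sum_distrib_left[symmetric] sum_distrib_right[symmetric] mult.assoc)

context gd begin

definition S9 :: "(nat \<Rightarrow> nat \<Rightarrow> nat \<Rightarrow> nat \<Rightarrow> nat \<Rightarrow> nat \<Rightarrow> nat \<Rightarrow> nat \<Rightarrow> nat \<Rightarrow> real) \<Rightarrow> real" where
  "S9 f = (\<Sum>a\<in>V. \<Sum>b\<in>V. \<Sum>c\<in>V. \<Sum>x1\<in>V. \<Sum>y1\<in>V. \<Sum>y2\<in>V. \<Sum>z1\<in>V. \<Sum>z2\<in>V. \<Sum>x2\<in>V. f a b c x1 y1 y2 z1 z2 x2)"

definition "FW G a b c x1 y1 y2 z1 z2 x2 \<longleftrightarrow> Good n a b c x1 y1 y2 z1 z2 x2 \<and>
   TA a b c x1 y1 y2 z1 z2 x2 \<subseteq> G \<and> TB a b c x1 y1 y2 z1 z2 x2 \<inter> G = {}"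
definition "RV G a b c x1 y1 y2 z1 z2 x2 \<longleftrightarrow> Good n a b c x1 y1 y2 z1 z2 x2 \<and>
   TB a b c x1 y1 y2 z1 z2 x2 \<subseteq> G \<and> TA a b c x1 y1 y2 z1 z2 x2 \<inter> G = {}"

lemma tri_switch:
  "(\<Sum>G\<in>Om. S9 (\<lambda>a b c x1 y1 y2 z1 z2 x2. of_bool (FW G a b c x1 y1 y2 z1 z2 x2))) =
   (\<Sum>G\<in>Om. S9 (\<lambda>a b c x1 y1 y2 z1 z2 x2. of_bool (RV G a b c x1 y1 y2 z1 z2 x2)))"
proof -
  have eq: "of_bool (Good n a b c x1 y1 y2 z1 z2 x2) * real (card {G\<in>Om. TA a b c x1 y1 y2 z1 z2 x2 \<subseteq> G \<and> TB a b c x1 y1 y2 z1 z2 x2 \<inter> G = {}})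
     = of_bool (Good n a b c x1 y1 y2 z1 z2 x2) * real (card {G\<in>Om. TB a b c x1 y1 y2 z1 z2 x2 \<subseteq> G \<and> TA a b c x1 y1 y2 z1 z2 x2 \<inter> G = {}})"
    for a b c x1 y1 y2 z1 z2 x2
    using switching[of n "TA a b c x1 y1 y2 z1 z2 x2" "TB a b c x1 y1 y2 z1 z2 x2" d]
    unfolding Good_def by (cases "good n (TA a b c x1 y1 y2 z1 z2 x2) (TB a b c x1 y1 y2 z1 z2 x2)") simp_all
  have "(\<Sum>G\<in>Om. S9 (\<lambda>a b c x1 y1 y2 z1 z2 x2. of_bool (FW G a b c x1 y1 y2 z1 z2 x2))) =
     S9 (\<lambda>a b c x1 y1 y2 z1 z2 x2. of_bool (Good n a b c x1 y1 y2 z1 z2 x2) * real (card {G\<in>Om. TA a b c x1 y1 y2 z1 z2 x2 \<subseteq> G \<and> TB a b c x1 y1 y2 z1 z2 x2 \<inter> G = {}}))"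
    unfolding S9_def cardsum_pull FW_def by (simp only: sum.swap[where B = Om])
  also have "\<dots> = S9 (\<lambda>a b c x1 y1 y2 z1 z2 x2. of_bool (Good n a b c x1 y1 y2 z1 z2 x2) * real (card {G\<in>Om. TB a b c x1 y1 y2 z1 z2 x2 \<subseteq> G \<and> TA a b c x1 y1 y2 z1 z2 x2 \<inter> G = {}}))"
    unfolding eq ..
  also have "\<dots> = (\<Sum>G\<in>Om. S9 (\<lambda>a b c x1 y1 y2 z1 z2 x2. of_bool (RV G a b c x1 y1 y2 z1 z2 x2)))"
    unfolding S9_def cardsum_pull RV_def by (simp only: sum.swap[where B = Om])
  finally show ?thesis .
qed

definition "tri G = (\<Sum>a\<in>V. \<Sum>b\<in>V. \<Sum>c\<in>V. of_bool (adj G a b \<and> adj G b c \<and> adj G c a) :: real)"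

lemma fwd_upper: assumes G: "G \<in> Om"
  shows "S9 (\<lambda>a b c x1 y1 y2 z1 z2 x2. of_bool (FW G a b c x1 y1 y2 z1 z2 x2)) \<le> tri G * Mm ^ 3"
proof -
  have "S9 (\<lambda>a b c x1 y1 y2 z1 z2 x2. of_bool (FW G a b c x1 y1 y2 z1 z2 x2)) \<le>
    S9 (\<lambda>a b c x1 y1 y2 z1 z2 x2. of_bool (adj G a b \<and> adj G b c \<and> adj G c a) *
        (of_bool (adj G x1 y1) * of_bool (adj G y2 z1) * of_bool (adj G z2 x2)))"
    unfolding S9_def by (intro sum_mono) (auto simp: FW_def TA_def eset_def adj_def)
  also have "\<dots> = (\<Sum>a\<in>V. \<Sum>b\<in>V. \<Sum>c\<in>V. of_bool (adj G a b \<and> adj G b c \<and> adj G c a) * Mm ^ 3)"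
  proof -
    have "(\<Sum>x1\<in>V. \<Sum>y1\<in>V. \<Sum>y2\<in>V. \<Sum>z1\<in>V. \<Sum>z2\<in>V. \<Sum>x2\<in>V.
        (of_bool (adj G x1 y1) * of_bool (adj G y2 z1) * of_bool (adj G z2 x2) :: real)) = Mm ^ 3"
      unfolding fact3 using M_sum[OF G] by (simp add: power3_eq_cube)
    then show ?thesis unfolding S9_def by (simp add: sum_distrib_left[symmetric])
  qed
  also have "\<dots> = tri G * Mm ^ 3" unfolding tri_def by (simp add: sum_distrib_right)
  finally show ?thesis .
qed

end

context gd begin

definition "kap = (14 + 2 * Dm) * Dm"
definition "mlow = max 0 (Mm - kap)"

lemma mlow_nonneg: "0 \<le> mlow" unfolding mlow_def by simp

lemma level_bound:
  assumes G: "G \<in> Om" and v: "v < n" and w: "w < n" and xs: "length xs \<le> 7" and ys: "length ys \<le> 7"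
  shows "mlow \<le> (\<Sum>p\<in>V. \<Sum>q\<in>V. of_bool (adj G p q \<and> \<not> (p \<in> set xs \<union> {y. adj G v y} \<or> q \<in> set ys \<union> {y. adj G w y})))"
proof -
  have f: "finite (set xs \<union> {y. adj G v y})" "finite (set ys \<union> {y. adj G w y})" using finite_nbset[OF G] by auto
  have c1: "real (card (set xs \<union> {y. adj G v y})) \<le> 7 + Dm"
    using card_FX[OF G v, of "set xs"] card_length[of xs] xs by simp
  have c2: "real (card (set ys \<union> {y. adj G w y})) \<le> 7 + Dm"
    using card_FX[OF G w, of "set ys"] card_length[of ys] ys by simp
  have "Mm - kap \<le> Mm - (real (card (set xs \<union> {y. adj G v y})) + real (card (set ys \<union> {y. adj G w y}))) * Dm"
    unfolding kap_def using c1 c2 Dm_nonneg by (intro diff_left_mono mult_right_mono) auto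
  also have "\<dots> \<le> (\<Sum>p\<in>V. \<Sum>q\<in>V. of_bool (adj G p q \<and> \<not> (p \<in> set xs \<union> {y. adj G v y} \<or> q \<in> set ys \<union> {y. adj G w y})))"
    by (rule good_count[OF G f])
  finally show ?thesis unfolding mlow_def by (simp add: sum_nonneg)
qed

lemma fwd_inner_lower:
  assumes G: "G \<in> Om" and t: "adj G a b" "adj G b c" "adj G c a"
  shows "mlow ^ 3 \<le> (\<Sum>x1\<in>V. \<Sum>y1\<in>V. \<Sum>y2\<in>V. \<Sum>z1\<in>V. \<Sum>z2\<in>V. \<Sum>x2\<in>V. of_bool (FW G a b c x1 y1 y2 z1 z2 x2))"
proof -
  have abc: "a < n" "b < n" "c < n" "a \<noteq> b" "b \<noteq> c" "c \<noteq> a" using adj_props[OF G] t by blast+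
  define C1 where "C1 x1 y1 = (of_bool (adj G x1 y1 \<and> \<not> (x1 \<in> set [a,b,c] \<union> {y. adj G a y} \<or> y1 \<in> set [a,b,c] \<union> {y. adj G b y})) :: real)" for x1 y1
  define C2 where "C2 x1 y1 y2 z1 = (of_bool (adj G y2 z1 \<and> \<not> (y2 \<in> set [a,b,c,x1,y1] \<union> {y. adj G b y} \<or> z1 \<in> set [a,b,c,x1,y1] \<union> {y. adj G c y})) :: real)" for x1 y1 y2 z1
  define C3 where "C3 x1 y1 y2 z1 z2 x2 = (of_bool (adj G z2 x2 \<and> \<not> (z2 \<in> set [a,b,c,x1,y1,y2,z1] \<union> {y. adj G c y} \<or> x2 \<in> set [a,b,c,x1,y1,y2,z1] \<union> {y. adj G a y})) :: real)" for x1 y1 y2 z1 z2 x2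
  have L3: "mlow \<le> (\<Sum>z2\<in>V. \<Sum>x2\<in>V. C3 x1 y1 y2 z1 z2 x2)" for x1 y1 y2 z1
    unfolding C3_def by (rule level_bound[OF G abc(3) abc(1)]) auto
  have L2: "mlow \<le> (\<Sum>y2\<in>V. \<Sum>z1\<in>V. C2 x1 y1 y2 z1)" for x1 y1
    unfolding C2_def by (rule level_bound[OF G abc(2) abc(3)]) auto
  have L1: "mlow \<le> (\<Sum>x1\<in>V. \<Sum>y1\<in>V. C1 x1 y1)"
    unfolding C1_def by (rule level_bound[OF G abc(1) abc(2)]) auto
  have C_nonneg: "0 \<le> C1 x1 y1" "0 \<le> C2 x1 y1 y2 z1" "0 \<le> C3 x1 y1 y2 z1 z2 x2" for x1 y1 y2 z1 z2 x2
    unfolding C1_def C2_def C3_def by auto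
  have M2: "mlow * mlow \<le> (\<Sum>y2\<in>V. \<Sum>z1\<in>V. C2 x1 y1 y2 z1 * (\<Sum>z2\<in>V. \<Sum>x2\<in>V. C3 x1 y1 y2 z1 z2 x2))" for x1 y1
  proof -
    have "mlow * mlow \<le> (\<Sum>y2\<in>V. \<Sum>z1\<in>V. C2 x1 y1 y2 z1) * mlow"
      using L2[of x1 y1] mlow_nonneg by (simp add: mult_right_mono)
    also have "\<dots> = (\<Sum>y2\<in>V. \<Sum>z1\<in>V. C2 x1 y1 y2 z1 * mlow)" by (simp add: sum_distrib_right)
    also have "\<dots> \<le> (\<Sum>y2\<in>V. \<Sum>z1\<in>V. C2 x1 y1 y2 z1 * (\<Sum>z2\<in>V. \<Sum>x2\<in>V. C3 x1 y1 y2 z1 z2 x2))"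
      by (intro sum_mono mult_left_mono L3 C_nonneg)
    finally show ?thesis .
  qed
  have M1: "mlow ^ 3 \<le> (\<Sum>x1\<in>V. \<Sum>y1\<in>V. C1 x1 y1 * (\<Sum>y2\<in>V. \<Sum>z1\<in>V. C2 x1 y1 y2 z1 * (\<Sum>z2\<in>V. \<Sum>x2\<in>V. C3 x1 y1 y2 z1 z2 x2)))"
  proof -
    have "mlow ^ 3 \<le> (\<Sum>x1\<in>V. \<Sum>y1\<in>V. C1 x1 y1) * (mlow * mlow)"
      using mult_right_mono[OF L1 mult_nonneg_nonneg[OF mlow_nonneg mlow_nonneg]] by (simp add: power3_eq_cube mult.assoc)
    also have "\<dots> = (\<Sum>x1\<in>V. \<Sum>y1\<in>V. C1 x1 y1 * (mlow * mlow))" by (simp add: sum_distrib_right)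
    also have "\<dots> \<le> (\<Sum>x1\<in>V. \<Sum>y1\<in>V. C1 x1 y1 * (\<Sum>y2\<in>V. \<Sum>z1\<in>V. C2 x1 y1 y2 z1 * (\<Sum>z2\<in>V. \<Sum>x2\<in>V. C3 x1 y1 y2 z1 z2 x2)))"
      by (intro sum_mono mult_left_mono M2 C_nonneg)
    finally show ?thesis .
  qed
  also have "\<dots> = (\<Sum>x1\<in>V. \<Sum>y1\<in>V. \<Sum>y2\<in>V. \<Sum>z1\<in>V. \<Sum>z2\<in>V. \<Sum>x2\<in>V. C1 x1 y1 * (C2 x1 y1 y2 z1 * C3 x1 y1 y2 z1 z2 x2))"
    by (simp add: sum_distrib_left)
  also have "\<dots> \<le> (\<Sum>x1\<in>V. \<Sum>y1\<in>V. \<Sum>y2\<in>V. \<Sum>z1\<in>V. \<Sum>z2\<in>V. \<Sum>x2\<in>V. of_bool (FW G a b c x1 y1 y2 z1 z2 x2))"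
  proof (intro sum_mono)
    fix x1 y1 y2 z1 z2 x2
    show "C1 x1 y1 * (C2 x1 y1 y2 z1 * C3 x1 y1 y2 z1 z2 x2) \<le> of_bool (FW G a b c x1 y1 y2 z1 z2 x2)"
    proof (cases "C1 x1 y1 = 1 \<and> C2 x1 y1 y2 z1 = 1 \<and> C3 x1 y1 y2 z1 z2 x2 = 1")
      case False
      then have "C1 x1 y1 = 0 \<or> C2 x1 y1 y2 z1 = 0 \<or> C3 x1 y1 y2 z1 z2 x2 = 0" unfolding C1_def C2_def C3_def by auto
      then show ?thesis by auto
    next
      case True
      then have h1: "adj G x1 y1" "x1 \<notin> {a,b,c}" "y1 \<notin> {a,b,c}" "\<not> adj G a x1" "\<not> adj G b y1"
        and h2: "adj G y2 z1" "y2 \<notin> {a,b,c,x1,y1}" "z1 \<notin> {a,b,c,x1,y1}" "\<not> adj G b y2" "\<not> adj G c z1"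
        and h3: "adj G z2 x2" "z2 \<notin> {a,b,c,x1,y1,y2,z1}" "x2 \<notin> {a,b,c,x1,y1,y2,z1}" "\<not> adj G c z2" "\<not> adj G a x2"
        unfolding C1_def C2_def C3_def by (auto split: if_splits)
      have n1: "x1 < n" "y1 < n" "x1 \<noteq> y1" using adj_props[OF G h1(1)] by auto
      have n2: "y2 < n" "z1 < n" "y2 \<noteq> z1" using adj_props[OF G h2(1)] by auto
      have n3: "z2 < n" "x2 < n" "z2 \<noteq> x2" using adj_props[OF G h3(1)] by auto
      have dist: "distinct [a,b,c,x1,y1,y2,z1,z2,x2]" using abc h1 h2 h3 n1 n2 n3 by auto
      have "Good n a b c x1 y1 y2 z1 z2 x2" by (rule Good_distinct[OF dist abc(1-3) n1(1,2) n2(1,2) n3(1,2)])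
      moreover have "TA a b c x1 y1 y2 z1 z2 x2 \<subseteq> G"
        using t h1(1) h2(1) h3(1) by (simp add: TA_def eset_def adj_def)
      moreover have "TB a b c x1 y1 y2 z1 z2 x2 \<inter> G = {}"
        using h1 h2 h3 by (simp add: TB_def eset_def adj_def)
      ultimately show ?thesis using True by (simp add: FW_def)
    qed
  qed
  finally show ?thesis .
qed

lemma fwd_lower: assumes G: "G \<in> Om"
  shows "tri G * mlow ^ 3 \<le> S9 (\<lambda>a b c x1 y1 y2 z1 z2 x2. of_bool (FW G a b c x1 y1 y2 z1 z2 x2))"
proof -
  have "tri G * mlow ^ 3 = (\<Sum>a\<in>V. \<Sum>b\<in>V. \<Sum>c\<in>V. of_bool (adj G a b \<and> adj G b c \<and> adj G c a) * mlow ^ 3)"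
    unfolding tri_def by (simp add: sum_distrib_right)
  also have "\<dots> \<le> S9 (\<lambda>a b c x1 y1 y2 z1 z2 x2. of_bool (FW G a b c x1 y1 y2 z1 z2 x2))"
    unfolding S9_def
  proof (intro sum_mono)
    fix a b c
    show "of_bool (adj G a b \<and> adj G b c \<and> adj G c a) * mlow ^ 3 \<le> (\<Sum>x1\<in>V. \<Sum>y1\<in>V. \<Sum>y2\<in>V. \<Sum>z1\<in>V. \<Sum>z2\<in>V. \<Sum>x2\<in>V. of_bool (FW G a b c x1 y1 y2 z1 z2 x2))"
      using fwd_inner_lower[OF G, of a b c] by (cases "adj G a b \<and> adj G b c \<and> adj G c a") (auto simp: sum_nonneg)
  qed
  finally show ?thesis .
qed

end


context gd begin

lemma rev_good:
  assumes G: "G \<in> Om" and abc: "distinct [a,b,c]"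
    and ad: "adj G a x1" "adj G a x2" "adj G b y1" "adj G b y2" "adj G c z1" "adj G c z2"
    and ne: "x1 \<noteq> x2" "y1 \<noteq> y2" "z1 \<noteq> z2"
    and nt: "\<not> adj G a b" "\<not> adj G b c" "\<not> adj G c a"
    and nl: "x1 \<noteq> y1" "y2 \<noteq> z1" "z2 \<noteq> x2" "x1 \<noteq> y2" "y2 \<noteq> z2" "x1 \<noteq> z2"
    and nq: "\<not> adj G x1 y1" "\<not> adj G y2 z1" "\<not> adj G z2 x2"
  shows "RV G a b c x1 y1 y2 z1 z2 x2"
proof -
  have lt: "a < n" "b < n" "c < n" "x1 < n" "x2 < n" "y1 < n" "y2 < n" "z1 < n" "z2 < n"
    using adj_props[OF G] ad by blast+
  have irr: "a \<noteq> x1" "a \<noteq> x2" "b \<noteq> y1" "b \<noteq> y2" "c \<noteq> z1" "c \<noteq> z2"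
    using adj_props[OF G] ad by blast+
  have nabc: "x1 \<noteq> b" "x1 \<noteq> c" "x2 \<noteq> b" "x2 \<noteq> c" "y1 \<noteq> a" "y1 \<noteq> c" "y2 \<noteq> a" "y2 \<noteq> c"
      "z1 \<noteq> a" "z1 \<noteq> b" "z2 \<noteq> a" "z2 \<noteq> b"
    using ad nt adj_sym[of G] by metis+
  have TBG: "TB a b c x1 y1 y2 z1 z2 x2 \<subseteq> G" using ad by (simp add: TB_def eset_def adj_def)
  have TAG: "TA a b c x1 y1 y2 z1 z2 x2 \<inter> G = {}" using nt nq by (simp add: TA_def eset_def adj_def)
  have "good n (TA a b c x1 y1 y2 z1 z2 x2) (TB a b c x1 y1 y2 z1 z2 x2)"
    unfolding TA_def TB_def eset_def
  proof (rule good_intro)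
    show "\<forall>(u, v)\<in>set [(a,b),(b,c),(c,a),(x1,y1),(y2,z1),(z2,x2)] \<union> set [(a,x1),(b,y1),(b,y2),(c,z1),(c,z2),(a,x2)]. u < n \<and> v < n \<and> u \<noteq> v"
      using lt abc nl irr by auto
    show "distinct (map (\<lambda>(u, v). {u, v}) [(a,b),(b,c),(c,a),(x1,y1),(y2,z1),(z2,x2)])"
      using abc nl ne nabc irr by (auto simp: doubleton_eq_iff)
    show "distinct (map (\<lambda>(u, v). {u, v}) [(a,x1),(b,y1),(b,y2),(c,z1),(c,z2),(a,x2)])"
      using abc nl ne nabc irr by (auto simp: doubleton_eq_iff)
    show "set (map (\<lambda>(u, v). {u, v}) [(a,b),(b,c),(c,a),(x1,y1),(y2,z1),(z2,x2)]) \<inter> set (map (\<lambda>(u, v). {u, v}) [(a,x1),(b,y1),(b,y2),(c,z1),(c,z2),(a,x2)]) = {}"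
      using TBG TAG unfolding TA_def TB_def eset_def by blast
  qed (rule bal_T)
  then show ?thesis using abc ne TBG TAG by (simp add: RV_def Good_def)
qed

end

lemma reord6: "(\<Sum>x1\<in>V. \<Sum>y1\<in>V. \<Sum>y2\<in>V. \<Sum>z1\<in>V. \<Sum>z2\<in>V. \<Sum>x2\<in>V. (F x1 y1 y2 z1 z2 x2::real))
  = (\<Sum>x1\<in>V. \<Sum>x2\<in>V. \<Sum>y1\<in>V. \<Sum>y2\<in>V. \<Sum>z1\<in>V. \<Sum>z2\<in>V. F x1 y1 y2 z1 z2 x2)"
proof -
  have "\<And>x1. (\<Sum>y1\<in>V. \<Sum>y2\<in>V. \<Sum>z1\<in>V. \<Sum>z2\<in>V. \<Sum>x2\<in>V. F x1 y1 y2 z1 z2 x2)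
     = (\<Sum>x2\<in>V. \<Sum>y1\<in>V. \<Sum>y2\<in>V. \<Sum>z1\<in>V. \<Sum>z2\<in>V. F x1 y1 y2 z1 z2 x2)"
  proof -
    fix x1
    have "(\<Sum>y1\<in>V. \<Sum>y2\<in>V. \<Sum>z1\<in>V. \<Sum>z2\<in>V. \<Sum>x2\<in>V. F x1 y1 y2 z1 z2 x2)
       = (\<Sum>y1\<in>V. \<Sum>y2\<in>V. \<Sum>z1\<in>V. \<Sum>x2\<in>V. \<Sum>z2\<in>V. F x1 y1 y2 z1 z2 x2)"
      by (intro sum.cong refl sum.swap)
    also have "\<dots> = (\<Sum>y1\<in>V. \<Sum>y2\<in>V. \<Sum>x2\<in>V. \<Sum>z1\<in>V. \<Sum>z2\<in>V. F x1 y1 y2 z1 z2 x2)"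
      by (intro sum.cong refl sum.swap)
    also have "\<dots> = (\<Sum>y1\<in>V. \<Sum>x2\<in>V. \<Sum>y2\<in>V. \<Sum>z1\<in>V. \<Sum>z2\<in>V. F x1 y1 y2 z1 z2 x2)"
      by (intro sum.cong refl sum.swap)
    also have "\<dots> = (\<Sum>x2\<in>V. \<Sum>y1\<in>V. \<Sum>y2\<in>V. \<Sum>z1\<in>V. \<Sum>z2\<in>V. F x1 y1 y2 z1 z2 x2)"
      by (rule sum.swap)
    finally show "?thesis x1" .
  qed
  then show ?thesis by simp
qed

lemma swapx6: "(\<Sum>x1\<in>V. \<Sum>y1\<in>V. \<Sum>y2\<in>V. \<Sum>z1\<in>V. \<Sum>z2\<in>V. \<Sum>x2\<in>V. (F x1 y1 y2 z1 z2 x2::real))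
  = (\<Sum>x1\<in>V. \<Sum>y1\<in>V. \<Sum>y2\<in>V. \<Sum>z1\<in>V. \<Sum>z2\<in>V. \<Sum>x2\<in>V. F x2 y1 y2 z1 z2 x1)"
proof -
  have "(\<Sum>x1\<in>V. \<Sum>y1\<in>V. \<Sum>y2\<in>V. \<Sum>z1\<in>V. \<Sum>z2\<in>V. \<Sum>x2\<in>V. F x1 y1 y2 z1 z2 x2)
    = (\<Sum>x1\<in>V. \<Sum>x2\<in>V. \<Sum>y1\<in>V. \<Sum>y2\<in>V. \<Sum>z1\<in>V. \<Sum>z2\<in>V. F x1 y1 y2 z1 z2 x2)" by (rule reord6)
  also have "\<dots> = (\<Sum>x2\<in>V. \<Sum>x1\<in>V. \<Sum>y1\<in>V. \<Sum>y2\<in>V. \<Sum>z1\<in>V. \<Sum>z2\<in>V. F x1 y1 y2 z1 z2 x2)" by (rule sum.swap)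
  also have "\<dots> = (\<Sum>x1\<in>V. \<Sum>y1\<in>V. \<Sum>y2\<in>V. \<Sum>z1\<in>V. \<Sum>z2\<in>V. \<Sum>x2\<in>V. F x2 y1 y2 z1 z2 x1)"
    by (rule reord6[symmetric])
  finally show ?thesis .
qed

lemma swapy6: "(\<Sum>x1\<in>V. \<Sum>y1\<in>V. \<Sum>y2\<in>V. \<Sum>z1\<in>V. \<Sum>z2\<in>V. \<Sum>x2\<in>V. (F x1 y1 y2 z1 z2 x2::real))
  = (\<Sum>x1\<in>V. \<Sum>y1\<in>V. \<Sum>y2\<in>V. \<Sum>z1\<in>V. \<Sum>z2\<in>V. \<Sum>x2\<in>V. F x1 y2 y1 z1 z2 x2)"
  by (rule sum.cong[OF refl], rule sum.swap)

lemma swapz6: "(\<Sum>x1\<in>V. \<Sum>y1\<in>V. \<Sum>y2\<in>V. \<Sum>z1\<in>V. \<Sum>z2\<in>V. \<Sum>x2\<in>V. (F x1 y1 y2 z1 z2 x2::real))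
  = (\<Sum>x1\<in>V. \<Sum>y1\<in>V. \<Sum>y2\<in>V. \<Sum>z1\<in>V. \<Sum>z2\<in>V. \<Sum>x2\<in>V. F x1 y1 y2 z2 z1 x2)"
  by (rule sum.cong[OF refl], rule sum.cong[OF refl], rule sum.cong[OF refl], rule sum.swap)

context gd begin

definition "al G u v = (of_bool (adj G u v) :: real)"
definition "pr G v p q = (of_bool (adj G v p \<and> adj G v q \<and> p \<noteq> q) :: real)"
definition "dd v = real (d v)"
definition "fd v = real (d v) * (real (d v) - 1)"

definition I6 :: "(nat \<Rightarrow> nat \<Rightarrow> nat \<Rightarrow> nat \<Rightarrow> nat \<Rightarrow> nat \<Rightarrow> real) \<Rightarrow> real" where
  "I6 F = (\<Sum>x1\<in>V. \<Sum>y1\<in>V. \<Sum>y2\<in>V. \<Sum>z1\<in>V. \<Sum>z2\<in>V. \<Sum>x2\<in>V. F x1 y1 y2 z1 z2 x2)"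

lemma S9_I6: "S9 f = (\<Sum>a\<in>V. \<Sum>b\<in>V. \<Sum>c\<in>V. I6 (f a b c))"
  unfolding S9_def I6_def ..

lemma S9_add: "S9 (\<lambda>a b c x1 y1 y2 z1 z2 x2. f a b c x1 y1 y2 z1 z2 x2 + g a b c x1 y1 y2 z1 z2 x2) = S9 f + S9 g"
  unfolding S9_def by (simp add: sum.distrib)

lemma S9_diff: "S9 (\<lambda>a b c x1 y1 y2 z1 z2 x2. f a b c x1 y1 y2 z1 z2 x2 - g a b c x1 y1 y2 z1 z2 x2) = S9 f - S9 g"
  unfolding S9_def by (simp add: sum_subtractf)

lemma S9_mono: "(\<And>a b c x1 y1 y2 z1 z2 x2. f a b c x1 y1 y2 z1 z2 x2 \<le> g a b c x1 y1 y2 z1 z2 x2) \<Longrightarrow> S9 f \<le> S9 g"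
  unfolding S9_def by (intro sum_mono) auto

lemma al_nonneg: "0 \<le> al G u v" unfolding al_def by simp

lemma al_sum: "G \<in> Om \<Longrightarrow> u < n \<Longrightarrow> (\<Sum>v\<in>V. al G u v) = dd u"
  unfolding al_def dd_def by (rule nb_sum)
lemma al_sum': "G \<in> Om \<Longrightarrow> u < n \<Longrightarrow> (\<Sum>v\<in>V. al G v u) = dd u"
  unfolding al_def dd_def by (rule nb_sum')

lemma pr_sum: "G \<in> Om \<Longrightarrow> u < n \<Longrightarrow> (\<Sum>p\<in>V. \<Sum>q\<in>V. pr G u p q) = fd u"
  unfolding pr_def fd_def by (rule pair_sum)

end

context gd begin
definition "MT = (\<Sum>a\<in>V. \<Sum>b\<in>V. \<Sum>c\<in>V. of_bool (distinct [a,b,c]) * (fd a * fd b * fd c))"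

definition "base G a b c x1 y1 y2 z1 z2 x2 = of_bool (distinct [a,b,c]) * (pr G a x1 x2 * pr G b y1 y2 * pr G c z1 z2)"

lemma base_sum: assumes G: "G \<in> Om" shows "S9 (base G) = MT"
proof -
  have "I6 (base G a b c) = of_bool (distinct [a,b,c]) * (fd a * fd b * fd c)" if "a < n" "b < n" "c < n" for a b c
  proof -
    have "I6 (base G a b c) = of_bool (distinct [a,b,c]) *
       (\<Sum>x1\<in>V. \<Sum>x2\<in>V. \<Sum>y1\<in>V. \<Sum>y2\<in>V. \<Sum>z1\<in>V. \<Sum>z2\<in>V. pr G a x1 x2 * pr G b y1 y2 * pr G c z1 z2)"
      unfolding I6_def base_def by (subst reord6) (simp only: sum_distrib_left)
    also have "(\<Sum>x1\<in>V. \<Sum>x2\<in>V. \<Sum>y1\<in>V. \<Sum>y2\<in>V. \<Sum>z1\<in>V. \<Sum>z2\<in>V. pr G a x1 x2 * pr G b y1 y2 * pr G c z1 z2) = fd a * fd b * fd c"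
      unfolding fact3 using pr_sum[OF G] that by (simp only:)
    finally show ?thesis .
  qed
  then show ?thesis unfolding S9_I6 MT_def by simp
qed

lemma rev_upper: assumes G: "G \<in> Om"
  shows "S9 (\<lambda>a b c x1 y1 y2 z1 z2 x2. of_bool (RV G a b c x1 y1 y2 z1 z2 x2)) \<le> Qm ^ 3"
proof -
  have "S9 (\<lambda>a b c x1 y1 y2 z1 z2 x2. of_bool (RV G a b c x1 y1 y2 z1 z2 x2)) \<le> S9 (base G)"
  proof (rule S9_mono)
    fix a b c x1 y1 y2 z1 z2 x2
    show "of_bool (RV G a b c x1 y1 y2 z1 z2 x2) \<le> base G a b c x1 y1 y2 z1 z2 x2"
    proof (cases "RV G a b c x1 y1 y2 z1 z2 x2")
      case True
      then have h: "distinct [a,b,c]" "x1 \<noteq> x2" "y1 \<noteq> y2" "z1 \<noteq> z2" "TB a b c x1 y1 y2 z1 z2 x2 \<subseteq> G"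
        unfolding RV_def Good_def by auto
      then have "adj G a x1 \<and> adj G a x2 \<and> adj G b y1 \<and> adj G b y2 \<and> adj G c z1 \<and> adj G c z2"
        by (simp add: TB_def eset_def adj_def)
      then show ?thesis using h(1-4) True unfolding base_def pr_def by simp
    next
      case False
      then show ?thesis unfolding base_def pr_def by simp
    qed
  qed
  also have "\<dots> = MT" by (rule base_sum[OF G])
  also have "\<dots> \<le> (\<Sum>a\<in>V. \<Sum>b\<in>V. \<Sum>c\<in>V. fd a * fd b * fd c)"
    unfolding MT_def
  proof (intro sum_mono)
    fix a b c
    have "0 \<le> fd a * fd b * fd c" unfolding fd_def by (intro mult_nonneg_nonneg fd_nonneg)
    then show "of_bool (distinct [a,b,c]) * (fd a * fd b * fd c) \<le> fd a * fd b * fd c" by simp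
  qed
  also have "\<dots> = Qm ^ 3"
  proof -
    have "(\<Sum>a\<in>V. \<Sum>b\<in>V. \<Sum>c\<in>V. fd a * fd b * fd c) = (\<Sum>a\<in>V. fd a) * (\<Sum>b\<in>V. fd b) * (\<Sum>c\<in>V. fd c)"
      by (simp only: sum_distrib_left[symmetric] sum_distrib_right[symmetric])
    then show ?thesis using sum_fd unfolding fd_def by (simp add: power3_eq_cube)
  qed
  finally show ?thesis .
qed

end


context gd begin

definition "Tot G \<phi> = (\<Sum>u\<in>V. \<Sum>v\<in>V. \<Sum>x\<in>V. \<Sum>y\<in>V. al G u x * al G v y * \<phi> u v x y)"

lemma dd_nonneg: "0 \<le> dd v" unfolding dd_def by simp
lemma dd_le: "v < n \<Longrightarrow> dd v \<le> Dm" unfolding dd_def by (rule deg_le)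
lemma dd_prod_le: assumes "a < n" "b < n" shows "dd a * dd b \<le> Dm ^ 2"
proof -
  have "dd a * dd b \<le> Dm * Dm" by (rule mult_mono) (use assms dd_le Dm_nonneg dd_nonneg in auto)
  then show ?thesis by (simp add: power2_eq_square)
qed
lemma S2_dd: "S2 = (\<Sum>v\<in>V. dd v ^ 2)" unfolding S2_def dd_def ..

lemma pairsum: "G \<in> Om \<Longrightarrow> b < n \<Longrightarrow> c < n \<Longrightarrow> (\<Sum>y\<in>V. \<Sum>z\<in>V. al G b y * al G c z) = dd b * dd c"
  by (simp add: sum_distrib_left[symmetric] sum_distrib_right[symmetric] al_sum)

lemma Phi_nonneg: "(\<And>u v x y. 0 \<le> \<phi> u v x y) \<Longrightarrow> 0 \<le> (\<Sum>x\<in>V. \<Sum>y\<in>V. al G u x * al G v y * \<phi> u v x y)"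
  by (intro sum_nonneg mult_nonneg_nonneg al_nonneg) auto

lemma pos1: assumes G: "G \<in> Om" and ph: "\<And>u v x y. 0 \<le> \<phi> u v x y"
  shows "S9 (\<lambda>a b c x1 y1 y2 z1 z2 x2. (al G a x1 * al G b y1 * \<phi> a b x1 y1) * (al G b y2 * al G c z1) * (al G c z2 * al G a x2))
     \<le> Dm ^ 2 * S2 * Tot G \<phi>"
proof -
  define Phi where "Phi a b = (\<Sum>x\<in>V. \<Sum>y\<in>V. al G a x * al G b y * \<phi> a b x y)" for a b
  have P0: "0 \<le> Phi a b" for a b unfolding Phi_def by (rule Phi_nonneg[OF ph])
  have "S9 (\<lambda>a b c x1 y1 y2 z1 z2 x2. (al G a x1 * al G b y1 * \<phi> a b x1 y1) * (al G b y2 * al G c z1) * (al G c z2 * al G a x2))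
     = (\<Sum>a\<in>V. \<Sum>b\<in>V. \<Sum>c\<in>V. Phi a b * (dd b * dd c) * (dd c * dd a))"
    unfolding S9_I6 I6_def fact3 Phi_def using pairsum[OF G] by simp
  also have "\<dots> \<le> (\<Sum>a\<in>V. \<Sum>b\<in>V. \<Sum>c\<in>V. Dm ^ 2 * Phi a b * dd c ^ 2)"
  proof (intro sum_mono)
    fix a b c assume "a \<in> V" "b \<in> V" "c \<in> V"
    then have "dd a * dd b \<le> Dm ^ 2" by (intro dd_prod_le) auto
    then have "(dd a * dd b) * (Phi a b * dd c ^ 2) \<le> Dm ^ 2 * (Phi a b * dd c ^ 2)"
      by (intro mult_right_mono mult_nonneg_nonneg P0) auto
    then show "Phi a b * (dd b * dd c) * (dd c * dd a) \<le> Dm ^ 2 * Phi a b * dd c ^ 2"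
      by (simp add: power2_eq_square mult_ac)
  qed
  also have "\<dots> = Dm ^ 2 * S2 * Tot G \<phi>"
  proof -
    have T: "Tot G \<phi> = (\<Sum>a\<in>V. \<Sum>b\<in>V. Phi a b)" unfolding Tot_def Phi_def ..
    show ?thesis unfolding T S2_dd by (simp only: sum_distrib_left[symmetric] sum_distrib_right[symmetric]; simp add: mult_ac)
  qed
  finally show ?thesis .
qed

lemma pos2: assumes G: "G \<in> Om" and ph: "\<And>u v x y. 0 \<le> \<phi> u v x y"
  shows "S9 (\<lambda>a b c x1 y1 y2 z1 z2 x2. (al G a x1 * al G b y1) * (al G b y2 * al G c z1 * \<phi> b c y2 z1) * (al G c z2 * al G a x2))
     \<le> Dm ^ 2 * S2 * Tot G \<phi>"
proof -
  define Phi where "Phi a b = (\<Sum>x\<in>V. \<Sum>y\<in>V. al G a x * al G b y * \<phi> a b x y)" for a b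
  have P0: "0 \<le> Phi a b" for a b unfolding Phi_def by (rule Phi_nonneg[OF ph])
  have "S9 (\<lambda>a b c x1 y1 y2 z1 z2 x2. (al G a x1 * al G b y1) * (al G b y2 * al G c z1 * \<phi> b c y2 z1) * (al G c z2 * al G a x2))
     = (\<Sum>a\<in>V. \<Sum>b\<in>V. \<Sum>c\<in>V. (dd a * dd b) * Phi b c * (dd c * dd a))"
    unfolding S9_I6 I6_def fact3 Phi_def using pairsum[OF G] by simp
  also have "\<dots> \<le> (\<Sum>a\<in>V. \<Sum>b\<in>V. \<Sum>c\<in>V. Dm ^ 2 * dd a ^ 2 * Phi b c)"
  proof (intro sum_mono)
    fix a b c assume "a \<in> V" "b \<in> V" "c \<in> V"
    then have "dd b * dd c \<le> Dm ^ 2" by (intro dd_prod_le) auto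
    then have "(dd b * dd c) * (Phi b c * dd a ^ 2) \<le> Dm ^ 2 * (Phi b c * dd a ^ 2)"
      by (intro mult_right_mono mult_nonneg_nonneg P0) auto
    then show "(dd a * dd b) * Phi b c * (dd c * dd a) \<le> Dm ^ 2 * dd a ^ 2 * Phi b c"
      by (simp add: power2_eq_square mult_ac)
  qed
  also have "\<dots> = Dm ^ 2 * S2 * Tot G \<phi>"
  proof -
    have T: "Tot G \<phi> = (\<Sum>a\<in>V. \<Sum>b\<in>V. Phi a b)" unfolding Tot_def Phi_def ..
    show ?thesis unfolding T S2_dd by (simp only: sum_distrib_left[symmetric] sum_distrib_right[symmetric]; simp add: mult_ac)
  qed
  finally show ?thesis .
qed

lemma pos3: assumes G: "G \<in> Om" and ph: "\<And>u v x y. 0 \<le> \<phi> u v x y"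
  shows "S9 (\<lambda>a b c x1 y1 y2 z1 z2 x2. (al G a x1 * al G b y1) * (al G b y2 * al G c z1) * (al G c z2 * al G a x2 * \<phi> c a z2 x2))
     \<le> Dm ^ 2 * S2 * Tot G \<phi>"
proof -
  define Phi where "Phi a b = (\<Sum>x\<in>V. \<Sum>y\<in>V. al G a x * al G b y * \<phi> a b x y)" for a b
  have P0: "0 \<le> Phi a b" for a b unfolding Phi_def by (rule Phi_nonneg[OF ph])
  have "S9 (\<lambda>a b c x1 y1 y2 z1 z2 x2. (al G a x1 * al G b y1) * (al G b y2 * al G c z1) * (al G c z2 * al G a x2 * \<phi> c a z2 x2))
     = (\<Sum>a\<in>V. \<Sum>b\<in>V. \<Sum>c\<in>V. (dd a * dd b) * (dd b * dd c) * Phi c a)"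
    unfolding S9_I6 I6_def fact3 Phi_def using pairsum[OF G] by simp
  also have "\<dots> \<le> (\<Sum>a\<in>V. \<Sum>b\<in>V. \<Sum>c\<in>V. Dm ^ 2 * dd b ^ 2 * Phi c a)"
  proof (intro sum_mono)
    fix a b c assume "a \<in> V" "b \<in> V" "c \<in> V"
    then have "dd a * dd c \<le> Dm ^ 2" by (intro dd_prod_le) auto
    then have "(dd a * dd c) * (Phi c a * dd b ^ 2) \<le> Dm ^ 2 * (Phi c a * dd b ^ 2)"
      by (intro mult_right_mono mult_nonneg_nonneg P0) auto
    then show "(dd a * dd b) * (dd b * dd c) * Phi c a \<le> Dm ^ 2 * dd b ^ 2 * Phi c a"
      by (simp add: power2_eq_square mult_ac)
  qed
  also have "\<dots> = (\<Sum>b\<in>V. \<Sum>a\<in>V. \<Sum>c\<in>V. Dm ^ 2 * dd b ^ 2 * Phi c a)" by (rule sum.swap)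
  also have "\<dots> = (\<Sum>b\<in>V. \<Sum>c\<in>V. \<Sum>a\<in>V. Dm ^ 2 * dd b ^ 2 * Phi c a)" by (intro sum.cong refl sum.swap)
  also have "\<dots> = Dm ^ 2 * S2 * Tot G \<phi>"
  proof -
    have T: "Tot G \<phi> = (\<Sum>a\<in>V. \<Sum>b\<in>V. Phi a b)" unfolding Tot_def Phi_def ..
    show ?thesis unfolding T S2_dd by (simp only: sum_distrib_left[symmetric] sum_distrib_right[symmetric]; simp add: mult_ac)
  qed
  finally show ?thesis .
qed


lemma sum_delta_r: "x \<in> A \<Longrightarrow> finite A \<Longrightarrow> (\<Sum>y\<in>A. f y * of_bool (x = y)) = (f x :: real)"
proof -
  assume "x \<in> A" "finite A"
  have "(\<Sum>y\<in>A. f y * of_bool (x = y)) = (\<Sum>y\<in>A. if x = y then f y else 0)" by (intro sum.cong) auto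
  then show ?thesis using \<open>x \<in> A\<close> \<open>finite A\<close> by (simp add: sum.delta)
qed

lemma Tot_l: assumes G: "G \<in> Om" shows "Tot G (\<lambda>u v x y. of_bool (x = y)) = S2"
proof -
  have "Tot G (\<lambda>u v x y. of_bool (x = y)) = (\<Sum>u\<in>V. \<Sum>v\<in>V. \<Sum>x\<in>V. al G u x * al G v x)"
    unfolding Tot_def by (intro sum.cong refl sum_delta_r) auto
  also have "\<dots> = (\<Sum>x\<in>V. \<Sum>u\<in>V. \<Sum>v\<in>V. al G u x * al G v x)" by (rule swap3)
  also have "\<dots> = (\<Sum>x\<in>V. dd x ^ 2)"
  proof (intro sum.cong refl)
    fix x assume "x \<in> V"
    then have "(\<Sum>u\<in>V. \<Sum>v\<in>V. al G u x * al G v x) = (\<Sum>u\<in>V. al G u x) * (\<Sum>v\<in>V. al G v x)"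
      by (simp only: sum_distrib_left[symmetric] sum_distrib_right[symmetric] mult.assoc)
    then show "(\<Sum>u\<in>V. \<Sum>v\<in>V. al G u x * al G v x) = dd x ^ 2" using al_sum'[OF G] \<open>x \<in> V\<close> by (simp add: power2_eq_square)
  qed
  finally show ?thesis unfolding S2_dd .
qed

definition "Ttot G = (\<Sum>u\<in>V. \<Sum>v\<in>V. al G u v * dd u * dd v)"

lemma Tot_t: assumes G: "G \<in> Om" shows "Tot G (\<lambda>u v x y. al G u v) = Ttot G"
  unfolding Tot_def Ttot_def
proof (intro sum.cong refl)
  fix u v assume uv: "u \<in> V" "v \<in> V"
  have "(\<Sum>x\<in>V. \<Sum>y\<in>V. al G u x * al G v y * al G u v) = (\<Sum>x\<in>V. al G u x) * (\<Sum>y\<in>V. al G v y) * al G u v"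
    by (simp only: sum_distrib_left[symmetric] sum_distrib_right[symmetric] mult.assoc)
  then show "(\<Sum>x\<in>V. \<Sum>y\<in>V. al G u x * al G v y * al G u v) = al G u v * dd u * dd v"
    using al_sum[OF G] uv by (simp add: mult_ac)
qed

lemma Tot_q: assumes G: "G \<in> Om" shows "Tot G (\<lambda>u v x y. al G x y) = Ttot G"
proof -
  have "Tot G (\<lambda>u v x y. al G x y) = (\<Sum>u\<in>V. \<Sum>x\<in>V. \<Sum>v\<in>V. \<Sum>y\<in>V. al G u x * al G v y * al G x y)"
    unfolding Tot_def by (rule sum.cong[OF refl], rule sum.swap)
  also have "\<dots> = (\<Sum>x\<in>V. \<Sum>u\<in>V. \<Sum>v\<in>V. \<Sum>y\<in>V. al G u x * al G v y * al G x y)" by (rule sum.swap)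
  also have "\<dots> = (\<Sum>x\<in>V. \<Sum>u\<in>V. \<Sum>y\<in>V. \<Sum>v\<in>V. al G u x * al G v y * al G x y)"
    by (rule sum.cong[OF refl], rule sum.cong[OF refl], rule sum.swap)
  also have "\<dots> = (\<Sum>x\<in>V. \<Sum>y\<in>V. \<Sum>u\<in>V. \<Sum>v\<in>V. al G u x * al G v y * al G x y)"
    by (rule sum.cong[OF refl], rule sum.swap)
  also have "\<dots> = Ttot G" unfolding Ttot_def
  proof (intro sum.cong refl)
    fix x y assume xy: "x \<in> V" "y \<in> V"
    have "(\<Sum>u\<in>V. \<Sum>v\<in>V. al G u x * al G v y * al G x y) = (\<Sum>u\<in>V. al G u x) * (\<Sum>v\<in>V. al G v y) * al G x y"
      by (simp only: sum_distrib_left[symmetric] sum_distrib_right[symmetric] mult.assoc)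
    then show "(\<Sum>u\<in>V. \<Sum>v\<in>V. al G u x * al G v y * al G x y) = al G x y * dd x * dd y"
      using al_sum'[OF G] xy by (simp add: mult_ac)
  qed
  finally show ?thesis .
qed

definition "Wd = Mm - (4 + 2 * Dm) * Dm"

lemma Ttot_bound: "Wd * (\<Sum>G\<in>Om. Ttot G) \<le> real (card Om) * S2 ^ 2"
proof -
  have "(\<Sum>G\<in>Om. Ttot G) = (\<Sum>u\<in>V. \<Sum>v\<in>V. Nab u v * dd u * dd v)"
    unfolding Ttot_def Nab_def al_def using swap3[where f = "\<lambda>u v G. of_bool (adj G u v) * dd u * dd v" and A = V and B = V and C = Om]
    by (simp add: sum_distrib_right)
  then have "Wd * (\<Sum>G\<in>Om. Ttot G) = (\<Sum>u\<in>V. \<Sum>v\<in>V. (Nab u v * Wd) * (dd u * dd v))"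
    by (simp add: sum_distrib_left mult_ac)
  also have "\<dots> \<le> (\<Sum>u\<in>V. \<Sum>v\<in>V. (real (card Om) * dd u * dd v) * (dd u * dd v))"
  proof (intro sum_mono mult_right_mono)
    fix u v assume uv: "u \<in> V" "v \<in> V"
    show "0 \<le> dd u * dd v" by (simp add: dd_nonneg)
    show "Nab u v * Wd \<le> real (card Om) * dd u * dd v"
    proof (cases "u = v")
      case True
      then have "Nab u v = 0" unfolding Nab_def using adj_irrefl by simp
      then show ?thesis by (simp add: dd_nonneg)
    next
      case False
      then show ?thesis using edge_prob[of u v] uv unfolding Wd_def dd_def by simp
    qed
  qed
  also have "\<dots> = real (card Om) * S2 ^ 2"
    unfolding S2_dd by (simp add: power2_eq_square sum_distrib_left sum_distrib_right mult_ac)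
  finally show ?thesis .
qed

end


lemma sum_list_ge1: "\<exists>b\<in>set bs. b \<Longrightarrow> 1 \<le> sum_list (map (\<lambda>b. of_bool b :: real) bs)"
proof (induction bs)
  case Nil then show ?case by simp
next
  case (Cons b bs)
  have nn: "0 \<le> sum_list (map (\<lambda>b. of_bool b :: real) bs)" by (induction bs) auto
  show ?case
  proof (cases b)
    case True then show ?thesis using nn by simp
  next
    case False then show ?thesis using Cons by simp
  qed
qed

lemma sum_list_nn: "0 \<le> sum_list (map (\<lambda>b. of_bool b :: real) bs)" by (induction bs) auto

context gd begin

definition "Pi0 G a b c x1 y1 y2 z1 z2 x2 = (al G a x1 * al G b y1) * (al G b y2 * al G c z1) * (al G c z2 * al G a x2)"
definition "bads G a b c x1 y1 y2 z1 z2 x2 = [adj G a b, adj G b c, adj G c a, x1 = y1, y2 = z1, z2 = x2,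
   x1 = y2, y2 = z2, z2 = x1, adj G x1 y1, adj G y2 z1, adj G z2 x2]"
definition "badind G a b c x1 y1 y2 z1 z2 x2 = sum_list (map (\<lambda>b. of_bool b :: real) (bads G a b c x1 y1 y2 z1 z2 x2))"

lemma rv_term: assumes G: "G \<in> Om"
  shows "base G a b c x1 y1 y2 z1 z2 x2 - Pi0 G a b c x1 y1 y2 z1 z2 x2 * badind G a b c x1 y1 y2 z1 z2 x2
     \<le> of_bool (RV G a b c x1 y1 y2 z1 z2 x2)"
proof -
  let ?P = "distinct [a,b,c] \<and> adj G a x1 \<and> adj G a x2 \<and> x1 \<noteq> x2 \<and> adj G b y1 \<and> adj G b y2 \<and> y1 \<noteq> y2
     \<and> adj G c z1 \<and> adj G c z2 \<and> z1 \<noteq> z2"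
  have bP: "base G a b c x1 y1 y2 z1 z2 x2 = of_bool ?P" unfolding base_def pr_def by simp
  have Pnn: "0 \<le> Pi0 G a b c x1 y1 y2 z1 z2 x2" unfolding Pi0_def by (intro mult_nonneg_nonneg al_nonneg)
  have bnn: "0 \<le> badind G a b c x1 y1 y2 z1 z2 x2" unfolding badind_def by (rule sum_list_nn)
  show ?thesis
  proof (cases ?P)
    case False
    then have "base G a b c x1 y1 y2 z1 z2 x2 = 0" using bP by simp
    moreover have "0 \<le> Pi0 G a b c x1 y1 y2 z1 z2 x2 * badind G a b c x1 y1 y2 z1 z2 x2"
      by (rule mult_nonneg_nonneg[OF Pnn bnn])
    moreover have "0 \<le> (of_bool (RV G a b c x1 y1 y2 z1 z2 x2) :: real)" by simp
    ultimately show ?thesis by linarith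
  next
    case True
    then have P1: "Pi0 G a b c x1 y1 y2 z1 z2 x2 = 1" unfolding Pi0_def al_def by simp
    show ?thesis
    proof (cases "\<exists>b\<in>set (bads G a b c x1 y1 y2 z1 z2 x2). b")
      case True
      then have "1 \<le> badind G a b c x1 y1 y2 z1 z2 x2" unfolding badind_def by (rule sum_list_ge1)
      then show ?thesis using bP P1 \<open>?P\<close> by simp
    next
      case False
      then have nb: "\<not> adj G a b" "\<not> adj G b c" "\<not> adj G c a" "x1 \<noteq> y1" "y2 \<noteq> z1" "z2 \<noteq> x2"
        "x1 \<noteq> y2" "y2 \<noteq> z2" "x1 \<noteq> z2" "\<not> adj G x1 y1" "\<not> adj G y2 z1" "\<not> adj G z2 x2"
        unfolding bads_def by auto
      have "RV G a b c x1 y1 y2 z1 z2 x2"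
        using \<open>?P\<close> nb by (intro rev_good[OF G]) auto
      then show ?thesis using bP \<open>?P\<close> Pnn bnn by (simp add: mult_nonneg_nonneg)
    qed
  qed
qed

lemma rev_lower: assumes G: "G \<in> Om"
  shows "MT - S9 (\<lambda>a b c x1 y1 y2 z1 z2 x2. Pi0 G a b c x1 y1 y2 z1 z2 x2 * badind G a b c x1 y1 y2 z1 z2 x2)
     \<le> S9 (\<lambda>a b c x1 y1 y2 z1 z2 x2. of_bool (RV G a b c x1 y1 y2 z1 z2 x2))"
proof -
  have "MT - S9 (\<lambda>a b c x1 y1 y2 z1 z2 x2. Pi0 G a b c x1 y1 y2 z1 z2 x2 * badind G a b c x1 y1 y2 z1 z2 x2)
    = S9 (\<lambda>a b c x1 y1 y2 z1 z2 x2. base G a b c x1 y1 y2 z1 z2 x2 - Pi0 G a b c x1 y1 y2 z1 z2 x2 * badind G a b c x1 y1 y2 z1 z2 x2)"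
    unfolding S9_diff base_sum[OF G] ..
  also have "\<dots> \<le> S9 (\<lambda>a b c x1 y1 y2 z1 z2 x2. of_bool (RV G a b c x1 y1 y2 z1 z2 x2))"
    by (rule S9_mono) (rule rv_term[OF G])
  finally show ?thesis .
qed


lemma S9_cong: "(\<And>a b c x1 y1 y2 z1 z2 x2. f a b c x1 y1 y2 z1 z2 x2 = g a b c x1 y1 y2 z1 z2 x2) \<Longrightarrow> S9 f = S9 g"
  unfolding S9_def by simp

lemma S9_I6_cong: "(\<And>a b c. I6 (f a b c) = I6 (g a b c)) \<Longrightarrow> S9 f = S9 g"
  unfolding S9_I6 by simp

lemma bad_bound: assumes G: "G \<in> Om"
  shows "S9 (\<lambda>a b c x1 y1 y2 z1 z2 x2. Pi0 G a b c x1 y1 y2 z1 z2 x2 * badind G a b c x1 y1 y2 z1 z2 x2)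
     \<le> Dm ^ 2 * S2 * (6 * Ttot G + 6 * S2)"
proof -
  let ?T1 = "\<lambda>a b c x1 y1 y2 z1 z2 x2. (al G a x1 * al G b y1 * al G a b) * (al G b y2 * al G c z1) * (al G c z2 * al G a x2)"
  let ?T2 = "\<lambda>a b c x1 y1 y2 z1 z2 x2. (al G a x1 * al G b y1 * of_bool (x1 = y1)) * (al G b y2 * al G c z1) * (al G c z2 * al G a x2)"
  let ?T3 = "\<lambda>a b c x1 y1 y2 z1 z2 x2. (al G a x1 * al G b y1 * al G x1 y1) * (al G b y2 * al G c z1) * (al G c z2 * al G a x2)"
  let ?T4 = "\<lambda>a b c x1 y1 y2 z1 z2 x2. (al G a x1 * al G b y1) * (al G b y2 * al G c z1 * al G b c) * (al G c z2 * al G a x2)"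
  let ?T5 = "\<lambda>a b c x1 y1 y2 z1 z2 x2. (al G a x1 * al G b y1) * (al G b y2 * al G c z1 * of_bool (y2 = z1)) * (al G c z2 * al G a x2)"
  let ?T6 = "\<lambda>a b c x1 y1 y2 z1 z2 x2. (al G a x1 * al G b y1) * (al G b y2 * al G c z1 * al G y2 z1) * (al G c z2 * al G a x2)"
  let ?T7 = "\<lambda>a b c x1 y1 y2 z1 z2 x2. (al G a x1 * al G b y1) * (al G b y2 * al G c z1) * (al G c z2 * al G a x2 * al G c a)"
  let ?T8 = "\<lambda>a b c x1 y1 y2 z1 z2 x2. (al G a x1 * al G b y1) * (al G b y2 * al G c z1) * (al G c z2 * al G a x2 * of_bool (z2 = x2))"
  let ?T9 = "\<lambda>a b c x1 y1 y2 z1 z2 x2. (al G a x1 * al G b y1) * (al G b y2 * al G c z1) * (al G c z2 * al G a x2 * al G z2 x2)"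
  let ?U1 = "\<lambda>a b c x1 y1 y2 z1 z2 x2. (al G a x1 * al G b y1) * (al G b y2 * al G c z1) * (al G c z2 * al G a x2) * of_bool (x1 = y2)"
  let ?U2 = "\<lambda>a b c x1 y1 y2 z1 z2 x2. (al G a x1 * al G b y1) * (al G b y2 * al G c z1) * (al G c z2 * al G a x2) * of_bool (y2 = z2)"
  let ?U3 = "\<lambda>a b c x1 y1 y2 z1 z2 x2. (al G a x1 * al G b y1) * (al G b y2 * al G c z1) * (al G c z2 * al G a x2) * of_bool (z2 = x1)"
  have dec: "S9 (\<lambda>a b c x1 y1 y2 z1 z2 x2. Pi0 G a b c x1 y1 y2 z1 z2 x2 * badind G a b c x1 y1 y2 z1 z2 x2)
    = S9 (\<lambda>a b c x1 y1 y2 z1 z2 x2. ?T1 a b c x1 y1 y2 z1 z2 x2 + ?T4 a b c x1 y1 y2 z1 z2 x2 + ?T7 a b c x1 y1 y2 z1 z2 x2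
       + ?T2 a b c x1 y1 y2 z1 z2 x2 + ?T5 a b c x1 y1 y2 z1 z2 x2 + ?T8 a b c x1 y1 y2 z1 z2 x2
       + ?U1 a b c x1 y1 y2 z1 z2 x2 + ?U2 a b c x1 y1 y2 z1 z2 x2 + ?U3 a b c x1 y1 y2 z1 z2 x2
       + ?T3 a b c x1 y1 y2 z1 z2 x2 + ?T6 a b c x1 y1 y2 z1 z2 x2 + ?T9 a b c x1 y1 y2 z1 z2 x2)"
    by (rule S9_cong) (simp add: Pi0_def badind_def bads_def al_def[symmetric] distrib_left mult_ac)
  have u1: "S9 ?U1 = S9 ?T2"
  proof (rule S9_I6_cong)
    fix a b c
    show "I6 (?U1 a b c) = I6 (?T2 a b c)" unfolding I6_def
      by (subst swapy6) (simp add: mult_ac)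
  qed
  have u2: "S9 ?U2 = S9 ?T5"
  proof (rule S9_I6_cong)
    fix a b c
    show "I6 (?U2 a b c) = I6 (?T5 a b c)" unfolding I6_def
      by (subst swapz6) (simp add: mult_ac)
  qed
  have u3: "S9 ?U3 = S9 ?T8"
  proof (rule S9_I6_cong)
    fix a b c
    show "I6 (?U3 a b c) = I6 (?T8 a b c)" unfolding I6_def
      by (subst swapx6) (simp add: mult_ac)
  qed
  have nn1: "\<And>u v x y. 0 \<le> al G u v" "\<And>u v x y. 0 \<le> (of_bool (x = y) :: real)" "\<And>u v x y. 0 \<le> al G x y"
    by (simp_all add: al_nonneg)
  have b1: "S9 ?T1 \<le> Dm ^ 2 * S2 * Ttot G" using pos1[OF G, of "\<lambda>u v x y. al G u v"] Tot_t[OF G] al_nonneg by simp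
  have b2: "S9 ?T2 \<le> Dm ^ 2 * S2 * S2" using pos1[OF G, of "\<lambda>u v x y. of_bool (x = y)"] Tot_l[OF G] by simp
  have b3: "S9 ?T3 \<le> Dm ^ 2 * S2 * Ttot G" using pos1[OF G, of "\<lambda>u v x y. al G x y"] Tot_q[OF G] al_nonneg by simp
  have b4: "S9 ?T4 \<le> Dm ^ 2 * S2 * Ttot G" using pos2[OF G, of "\<lambda>u v x y. al G u v"] Tot_t[OF G] al_nonneg by simp
  have b5: "S9 ?T5 \<le> Dm ^ 2 * S2 * S2" using pos2[OF G, of "\<lambda>u v x y. of_bool (x = y)"] Tot_l[OF G] by simp
  have b6: "S9 ?T6 \<le> Dm ^ 2 * S2 * Ttot G" using pos2[OF G, of "\<lambda>u v x y. al G x y"] Tot_q[OF G] al_nonneg by simp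
  have b7: "S9 ?T7 \<le> Dm ^ 2 * S2 * Ttot G" using pos3[OF G, of "\<lambda>u v x y. al G u v"] Tot_t[OF G] al_nonneg by simp
  have b8: "S9 ?T8 \<le> Dm ^ 2 * S2 * S2" using pos3[OF G, of "\<lambda>u v x y. of_bool (x = y)"] Tot_l[OF G] by simp
  have b9: "S9 ?T9 \<le> Dm ^ 2 * S2 * Ttot G" using pos3[OF G, of "\<lambda>u v x y. al G x y"] Tot_q[OF G] al_nonneg by simp
  have "S9 (\<lambda>a b c x1 y1 y2 z1 z2 x2. Pi0 G a b c x1 y1 y2 z1 z2 x2 * badind G a b c x1 y1 y2 z1 z2 x2)
     = S9 ?T1 + S9 ?T4 + S9 ?T7 + S9 ?T2 + S9 ?T5 + S9 ?T8 + S9 ?U1 + S9 ?U2 + S9 ?U3 + S9 ?T3 + S9 ?T6 + S9 ?T9"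
    unfolding dec by (simp only: S9_add)
  also have "\<dots> \<le> Dm ^ 2 * S2 * (6 * Ttot G + 6 * S2)"
    unfolding u1 u2 u3 using b1 b2 b3 b4 b5 b6 b7 b8 b9 by (simp add: algebra_simps)
  finally show ?thesis .
qed
end


context gd begin

lemma fd_le: "v < n \<Longrightarrow> fd v \<le> Dm ^ 2"
proof -
  assume v: "v < n"
  have "fd v \<le> dd v * dd v" unfolding fd_def dd_def by (simp add: algebra_simps)
  also have "\<dots> \<le> Dm ^ 2" using dd_prod_le[OF v v] .
  finally show ?thesis .
qed

lemma fd_ge0: "0 \<le> fd v" unfolding fd_def by (rule fd_nonneg)

lemma fd_sq_le: "v < n \<Longrightarrow> fd v * fd v \<le> Dm ^ 2 * fd v"
  using fd_le fd_ge0 by (intro mult_right_mono) auto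

lemma sum_fd': "(\<Sum>v\<in>V. fd v) = Qm" unfolding fd_def by (rule sum_fd)

lemma MT_lower: "Qm ^ 3 - 3 * Dm ^ 2 * Qm ^ 2 \<le> MT"
proof -
  have Q3: "Qm ^ 3 = (\<Sum>a\<in>V. \<Sum>b\<in>V. \<Sum>c\<in>V. fd a * fd b * fd c)"
    unfolding sum_fd'[symmetric] by (simp only: sum_distrib_left[symmetric] sum_distrib_right[symmetric] power3_eq_cube)
  have "Qm ^ 3 - MT = (\<Sum>a\<in>V. \<Sum>b\<in>V. \<Sum>c\<in>V. of_bool (\<not> distinct [a,b,c]) * (fd a * fd b * fd c))"
  proof -
    have "\<And>a b c. fd a * fd b * fd c - of_bool (distinct [a,b,c]) * (fd a * fd b * fd c) = of_bool (\<not> distinct [a,b,c]) * (fd a * fd b * fd c)"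
      by (simp only: of_bool_not_iff) (simp add: algebra_simps)
    then show ?thesis unfolding Q3 MT_def by (simp only: sum_subtractf[symmetric])
  qed
  also have "\<dots> \<le> (\<Sum>a\<in>V. \<Sum>b\<in>V. \<Sum>c\<in>V. fd a * fd c * (fd b * of_bool (a = b)) + fd a * fd b * (fd c * of_bool (b = c)) + fd b * fd c * (fd a * of_bool (c = a)))"
  proof (intro sum_mono)
    fix a b c
    have "0 \<le> fd a * fd b * fd c" by (intro mult_nonneg_nonneg fd_ge0)
    then show "of_bool (\<not> distinct [a,b,c]) * (fd a * fd b * fd c) \<le> fd a * fd c * (fd b * of_bool (a = b)) + fd a * fd b * (fd c * of_bool (b = c)) + fd b * fd c * (fd a * of_bool (c = a))"
    proof -
      have t1: "0 \<le> fd a * fd c * (fd b * of_bool (a = b))" by (intro mult_nonneg_nonneg fd_ge0) simp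
      have t2: "0 \<le> fd a * fd b * (fd c * of_bool (b = c))" by (intro mult_nonneg_nonneg fd_ge0) simp
      have t3: "0 \<le> fd b * fd c * (fd a * of_bool (c = a))" by (intro mult_nonneg_nonneg fd_ge0) simp
      show ?thesis
      proof (cases "distinct [a,b,c]")
        case True then show ?thesis using t1 t2 t3 by simp
      next
        case False
        then have "a = b \<or> b = c \<or> c = a" by auto
        then have "fd a * fd b * fd c \<le> fd a * fd c * (fd b * of_bool (a = b)) + fd a * fd b * (fd c * of_bool (b = c)) + fd b * fd c * (fd a * of_bool (c = a))"
        proof (elim disjE)
          assume "a = b" then have "fd a * fd c * (fd b * of_bool (a = b)) = fd a * fd b * fd c" by (simp add: mult_ac)
          then show ?thesis using t2 t3 by linarith
        next
          assume "b = c" then have "fd a * fd b * (fd c * of_bool (b = c)) = fd a * fd b * fd c" by (simp add: mult_ac)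
          then show ?thesis using t1 t3 by linarith
        next
          assume "c = a" then have "fd b * fd c * (fd a * of_bool (c = a)) = fd a * fd b * fd c" by (simp add: mult_ac)
          then show ?thesis using t1 t2 by linarith
        qed
        then show ?thesis using False by simp
      qed
    qed
  qed
  also have "\<dots> = (\<Sum>a\<in>V. \<Sum>c\<in>V. fd a * fd c * fd a) + (\<Sum>a\<in>V. \<Sum>b\<in>V. fd a * fd b * fd b) + (\<Sum>a\<in>V. \<Sum>b\<in>V. fd b * fd a * fd a)"
  proof -
    have e1: "(\<Sum>b\<in>V. \<Sum>c\<in>V. fd a * fd c * (fd b * of_bool (a = b))) = (\<Sum>c\<in>V. fd a * fd c * fd a)" if "a \<in> V" for a
    proof -
      have "(\<Sum>b\<in>V. \<Sum>c\<in>V. fd a * fd c * (fd b * of_bool (a = b))) = (\<Sum>c\<in>V. \<Sum>b\<in>V. fd a * fd c * (fd b * of_bool (a = b)))"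
        by (rule sum.swap)
      also have "\<dots> = (\<Sum>c\<in>V. fd a * fd c * fd a)"
        using that by (simp add: sum_distrib_left[symmetric] sum_delta_r)
      finally show ?thesis .
    qed
    have e2: "(\<Sum>c\<in>V. fd a * fd b * (fd c * of_bool (b = c))) = fd a * fd b * fd b" if "b \<in> V" for a b
      using that by (simp add: sum_distrib_left[symmetric] sum_delta_r)
    have e3: "(\<Sum>a\<in>V. \<Sum>b\<in>V. \<Sum>c\<in>V. fd b * fd c * (fd a * of_bool (c = a))) = (\<Sum>a\<in>V. \<Sum>b\<in>V. fd b * fd a * fd a)"
    proof (intro sum.cong refl)
      fix a b assume a: "a \<in> V"
      have "(\<Sum>c\<in>V. fd b * fd c * (fd a * of_bool (c = a))) = (\<Sum>c\<in>V. (fd b * fd a * fd c) * of_bool (a = c))"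
        by (intro sum.cong) (auto simp: mult_ac)
      also have "\<dots> = fd b * fd a * fd a" by (rule sum_delta_r[OF a]) simp
      finally show "(\<Sum>c\<in>V. fd b * fd c * (fd a * of_bool (c = a))) = fd b * fd a * fd a" .
    qed
    show ?thesis unfolding sum.distrib e3 using e1 e2 by simp
  qed
  also have "\<dots> \<le> Dm ^ 2 * Qm ^ 2 + Dm ^ 2 * Qm ^ 2 + Dm ^ 2 * Qm ^ 2"
  proof -
    have sq: "(\<Sum>a\<in>V. fd a * fd a) \<le> Dm ^ 2 * Qm"
      using sum_mono[of V "\<lambda>a. fd a * fd a" "\<lambda>a. Dm ^ 2 * fd a"] fd_sq_le
      by (simp add: sum_distrib_left[symmetric] sum_fd')
    have nq: "0 \<le> Qm" unfolding Qm_def by simp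
    have "(\<Sum>a\<in>V. \<Sum>c\<in>V. fd a * fd c * fd a) = (\<Sum>a\<in>V. fd a * fd a) * Qm"
      by (simp add: sum_fd'[symmetric] sum_distrib_left sum_distrib_right mult_ac)
    moreover have "(\<Sum>a\<in>V. \<Sum>b\<in>V. fd a * fd b * fd b) = Qm * (\<Sum>a\<in>V. fd a * fd a)"
      unfolding sum_fd'[symmetric] by (simp only: sum_distrib_left[symmetric] sum_distrib_right[symmetric] mult.assoc)
    moreover have "(\<Sum>a\<in>V. \<Sum>b\<in>V. fd b * fd a * fd a) = (\<Sum>a\<in>V. fd a * fd a) * Qm"
      by (simp add: sum_fd'[symmetric] sum_distrib_left sum_distrib_right mult_ac)
    ultimately show ?thesis using mult_right_mono[OF sq nq] by (simp add: power2_eq_square mult_ac)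
  qed
  finally show ?thesis by simp
qed

end


context gd begin

definition "Str G = {t \<in> V \<times> V \<times> V. case t of (a,b,c) \<Rightarrow> adj G a b \<and> adj G b c \<and> adj G c a}"

lemma tri_card: "tri G = real (card (Str G))"
proof -
  have "tri G = (\<Sum>t\<in>V \<times> V \<times> V. of_bool (case t of (a,b,c) \<Rightarrow> adj G a b \<and> adj G b c \<and> adj G c a))"
    unfolding tri_def by (simp add: sum.cartesian_product) (intro sum.cong refl, auto split: prod.splits)
  also have "\<dots> = real (card (Str G))" unfolding Str_def by (rule sum_of_bool_card) simp
  finally show ?thesis .
qed

lemma Str_fiber:
  assumes G: "G \<in> Om" and t: "(a,b,c) \<in> Str G"
  shows "card {t\<in>Str G. (case t of (x,y,z) \<Rightarrow> {x,y,z}) = {a,b,c}} = 6"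
proof -
  have ad: "adj G a b" "adj G b c" "adj G c a" using t by (auto simp: Str_def)
  have ne: "a \<noteq> b" "b \<noteq> c" "c \<noteq> a" using adj_props[OF G] ad by blast+
  have "{t\<in>Str G. (case t of (x,y,z) \<Rightarrow> {x,y,z}) = {a,b,c}} = {(a,b,c),(a,c,b),(b,a,c),(b,c,a),(c,a,b),(c,b,a)}"
  proof (rule set_eqI, rule iffI)
    fix t assume "t \<in> {t\<in>Str G. (case t of (x,y,z) \<Rightarrow> {x,y,z}) = {a,b,c}}"
    then obtain x y z where tx: "t = (x,y,z)" "adj G x y" "adj G y z" "adj G z x" "{x,y,z} = {a,b,c}"
      by (auto simp: Str_def)
    have "x \<noteq> y" "y \<noteq> z" "z \<noteq> x" using adj_props[OF G] tx(2-4) by blast+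
    moreover have "x \<in> {a,b,c}" "y \<in> {a,b,c}" "z \<in> {a,b,c}" using tx(5) by (auto simp: set_eq_iff)
    ultimately show "t \<in> {(a,b,c),(a,c,b),(b,a,c),(b,c,a),(c,a,b),(c,b,a)}" using tx(1) ne by auto
  next
    fix t assume "t \<in> {(a,b,c),(a,c,b),(b,a,c),(b,c,a),(c,a,b),(c,b,a)}"
    moreover have "a < n" "b < n" "c < n" using adj_props[OF G] ad by blast+
    ultimately show "t \<in> {t\<in>Str G. (case t of (x,y,z) \<Rightarrow> {x,y,z}) = {a,b,c}}"
      using ad by (auto simp: Str_def adj_sym[of G] insert_commute)
  qed
  then show ?thesis using ne by simp
qed

lemma tri_triangles: assumes G: "G \<in> Om" shows "tri G = 6 * real (triangles G)"
proof -
  define g where "g t = (case t of (x,y,z) \<Rightarrow> {x,y,z::nat})" for t :: "nat \<times> nat \<times> nat"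
  have fin: "finite (Str G)" unfolding Str_def by simp
  have img: "g ` Str G = {T. \<exists>a b c. a \<noteq> b \<and> b \<noteq> c \<and> a \<noteq> c \<and> T = {a, b, c} \<and> {a, b} \<in> G \<and> {b, c} \<in> G \<and> {a, c} \<in> G}"
  proof (rule set_eqI, rule iffI)
    fix T assume "T \<in> g ` Str G"
    then obtain a b c where "(a,b,c) \<in> Str G" "T = {a,b,c}" by (auto simp: g_def)
    then have ad: "adj G a b" "adj G b c" "adj G c a" by (auto simp: Str_def)
    then have "a \<noteq> b" "b \<noteq> c" "c \<noteq> a" using adj_props[OF G] by blast+
    then show "T \<in> {T. \<exists>a b c. a \<noteq> b \<and> b \<noteq> c \<and> a \<noteq> c \<and> T = {a, b, c} \<and> {a, b} \<in> G \<and> {b, c} \<in> G \<and> {a, c} \<in> G}"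
      using ad \<open>T = {a,b,c}\<close> by (auto simp: adj_def insert_commute)
  next
    fix T assume "T \<in> {T. \<exists>a b c. a \<noteq> b \<and> b \<noteq> c \<and> a \<noteq> c \<and> T = {a, b, c} \<and> {a, b} \<in> G \<and> {b, c} \<in> G \<and> {a, c} \<in> G}"
    then obtain a b c where h: "T = {a,b,c}" "adj G a b" "adj G b c" "adj G c a"
      by (auto simp: adj_def insert_commute)
    then have "a < n" "b < n" "c < n" using adj_props[OF G] by blast+
    then have "(a,b,c) \<in> Str G" using h by (simp add: Str_def)
    then show "T \<in> g ` Str G" using h(1) unfolding g_def by force
  qed
  have "card (Str G) = (\<Sum>T\<in>g ` Str G. card {t\<in>Str G. g t = T})"
    using sum.image_gen[OF fin, of "\<lambda>_. 1::nat" g] by simp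
  also have "\<dots> = (\<Sum>T\<in>g ` Str G. 6)"
  proof (rule sum.cong[OF refl])
    fix T assume "T \<in> g ` Str G"
    then obtain a b c where "(a,b,c) \<in> Str G" "T = {a,b,c}" by (auto simp: g_def)
    then show "card {t\<in>Str G. g t = T} = 6" using Str_fiber[OF G] unfolding g_def by simp
  qed
  also have "\<dots> = 6 * triangles G" unfolding triangles_def img[symmetric] by simp
  finally show ?thesis using tri_card by simp
qed

end


context gd begin

lemma tri_nonneg: "0 \<le> tri G" unfolding tri_def by (intro sum_nonneg) auto
lemma Ttot_nonneg: "0 \<le> Ttot G" unfolding Ttot_def by (intro sum_nonneg mult_nonneg_nonneg al_nonneg dd_nonneg)
lemma S2_nonneg: "0 \<le> S2" unfolding S2_def by (intro sum_nonneg) auto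

lemma main_bound:
  assumes ne: "Om \<noteq> {}" and M12: "M1 n d \<le> M2 n d" and Mpos: "0 < Mm" and rs: "Dm ^ 2 / Mm \<le> 1 / 100"
  shows "1 - 123 * (Dm ^ 2 / Mm) \<le> expected_triangles n d / (Qm ^ 3 / (6 * Mm ^ 3))"
    and "expected_triangles n d / (Qm ^ 3 / (6 * Mm ^ 3)) \<le> 1 / (1 - 16 * (Dm ^ 2 / Mm)) ^ 3"
proof -
  define r where "r = Dm ^ 2 / Mm"
  define c where "c = real (card Om)"
  define T where "T = (\<Sum>G\<in>Om. tri G)"
  define B where "B = (\<Sum>G\<in>Om. S9 (\<lambda>a b c x1 y1 y2 z1 z2 x2. Pi0 G a b c x1 y1 y2 z1 z2 x2 * badind G a b c x1 y1 y2 z1 z2 x2))"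
  define X where "X = (\<Sum>G\<in>Om. Ttot G)"
  have r0: "0 \<le> r" unfolding r_def using Mpos by simp
  have r1: "r \<le> 1/100" using rs unfolding r_def .
  have cpos: "0 < c" unfolding c_def using ne finite_graphs_deg by (simp add: card_gt_0_iff)
  have QM: "Mm \<le> Qm" using M12 unfolding Mm_def Qm_def by simp
  have Qpos: "0 < Qm" using QM Mpos by simp
  have D2: "Dm ^ 2 = r * Mm" unfolding r_def using Mpos by simp
  have D1: "1 \<le> Dm"
  proof -
    obtain v where v: "v < n" "0 < d v"
    proof (rule ccontr)
      assume "\<not> thesis"
      then have "\<forall>v<n. d v = 0" using that by auto
      then have "Mm = 0" unfolding Mm_def M1_def by simp
      then show False using Mpos by simp
    qed
    then show ?thesis using deg_le[OF v(1)] by linarith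
  qed
  have T0: "0 \<le> T" unfolding T_def by (intro sum_nonneg tri_nonneg)
  have X0: "0 \<le> X" unfolding X_def by (intro sum_nonneg Ttot_nonneg)
  have SFR: "(\<Sum>G\<in>Om. S9 (\<lambda>a b c x1 y1 y2 z1 z2 x2. of_bool (FW G a b c x1 y1 y2 z1 z2 x2))) =
     (\<Sum>G\<in>Om. S9 (\<lambda>a b c x1 y1 y2 z1 z2 x2. of_bool (RV G a b c x1 y1 y2 z1 z2 x2)))" by (rule tri_switch)
  have h1: "(\<Sum>G\<in>Om. S9 (\<lambda>a b c x1 y1 y2 z1 z2 x2. of_bool (FW G a b c x1 y1 y2 z1 z2 x2))) \<le> T * Mm ^ 3"
    unfolding T_def sum_distrib_right by (intro sum_mono fwd_upper)
  have h2: "T * mlow ^ 3 \<le> (\<Sum>G\<in>Om. S9 (\<lambda>a b c x1 y1 y2 z1 z2 x2. of_bool (FW G a b c x1 y1 y2 z1 z2 x2)))"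
    unfolding T_def sum_distrib_right by (intro sum_mono fwd_lower)
  have h3: "(\<Sum>G\<in>Om. S9 (\<lambda>a b c x1 y1 y2 z1 z2 x2. of_bool (RV G a b c x1 y1 y2 z1 z2 x2))) \<le> c * Qm ^ 3"
    using sum_mono[of Om _ "\<lambda>_. Qm ^ 3", OF rev_upper] unfolding c_def by simp
  have h4: "c * MT - B \<le> (\<Sum>G\<in>Om. S9 (\<lambda>a b c x1 y1 y2 z1 z2 x2. of_bool (RV G a b c x1 y1 y2 z1 z2 x2)))"
  proof -
    have "c * MT - B = (\<Sum>G\<in>Om. MT - S9 (\<lambda>a b c x1 y1 y2 z1 z2 x2. Pi0 G a b c x1 y1 y2 z1 z2 x2 * badind G a b c x1 y1 y2 z1 z2 x2))"
      unfolding c_def B_def by (simp add: sum_subtractf)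
    also have "\<dots> \<le> (\<Sum>G\<in>Om. S9 (\<lambda>a b c x1 y1 y2 z1 z2 x2. of_bool (RV G a b c x1 y1 y2 z1 z2 x2)))"
      by (intro sum_mono rev_lower)
    finally show ?thesis .
  qed
  have h5: "B \<le> Dm ^ 2 * S2 * (6 * X + 6 * c * S2)"
  proof -
    have "B \<le> (\<Sum>G\<in>Om. Dm ^ 2 * S2 * (6 * Ttot G + 6 * S2))" unfolding B_def by (intro sum_mono bad_bound)
    also have "\<dots> = Dm ^ 2 * S2 * (6 * X + 6 * c * S2)"
      unfolding X_def c_def by (simp add: sum_distrib_left sum.distrib algebra_simps)
    finally show ?thesis .
  qed
  have h6: "Wd * X \<le> c * S2 ^ 2" unfolding X_def c_def by (rule Ttot_bound)
  have h7: "Qm ^ 3 - 3 * Dm ^ 2 * Qm ^ 2 \<le> MT" by (rule MT_lower)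
  have h8: "S2 \<le> 2 * Qm" using S2_eq QM by simp
  have S20: "0 \<le> S2" by (rule S2_nonneg)
  have h9: "(\<Sum>G\<in>Om. real (triangles G)) = T / 6" unfolding T_def using tri_triangles by (simp add: sum_divide_distrib)
  have ratio: "expected_triangles n d / (Qm ^ 3 / (6 * Mm ^ 3)) = T * Mm ^ 3 / (c * Qm ^ 3)"
    unfolding expected_triangles_def h9 c_def[symmetric] using cpos Qpos Mpos by (simp add: field_simps)
  have kap_le: "kap \<le> 16 * r * Mm"
  proof -
    have "14 * Dm \<le> 14 * Dm ^ 2" using D1 by (simp add: power2_eq_square)
    then show ?thesis unfolding kap_def using D2 by (simp add: algebra_simps power2_eq_square)
  qed
  have ml: "Mm * (1 - 16 * r) \<le> mlow" unfolding mlow_def using kap_le by (simp add: algebra_simps)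
  have pos16: "0 < 1 - 16 * r" using r1 by simp
  have "(Mm * (1 - 16 * r)) ^ 3 \<le> mlow ^ 3" using ml Mpos pos16 by (intro power_mono) auto
  then have "T * (Mm * (1 - 16 * r)) ^ 3 \<le> T * mlow ^ 3" using T0 by (rule mult_left_mono)
  then have U: "T * Mm ^ 3 * (1 - 16 * r) ^ 3 \<le> c * Qm ^ 3" using h2 h3 SFR by (simp add: power_mult_distrib mult_ac)
  show "expected_triangles n d / (Qm ^ 3 / (6 * Mm ^ 3)) \<le> 1 / (1 - 16 * (Dm ^ 2 / Mm)) ^ 3"
    unfolding ratio r_def[symmetric] using U cpos Qpos pos16 by (simp add: field_simps)
  have Wd2: "Mm / 2 \<le> Wd"
  proof -
    have "4 * Dm \<le> 4 * Dm ^ 2" using D1 by (simp add: power2_eq_square)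
    then have "Wd \<ge> Mm - 6 * r * Mm" unfolding Wd_def using D2 by (simp add: algebra_simps power2_eq_square)
    moreover have "6 * r * Mm \<le> Mm / 2" using r1 Mpos by (simp add: mult_right_mono)
    ultimately show ?thesis by linarith
  qed
  have XB: "Mm * X \<le> 2 * c * S2 ^ 2"
  proof -
    have "(Mm / 2) * X \<le> Wd * X" using Wd2 X0 by (rule mult_right_mono)
    then show ?thesis using h6 by simp
  qed
  have S2Q: "S2 ^ 2 \<le> 4 * Qm ^ 2" and S3Q: "S2 ^ 3 \<le> 8 * Qm ^ 3"
  proof -
    have "S2 ^ 2 \<le> (2 * Qm) ^ 2" using h8 S20 by (intro power_mono) auto
    then show "S2 ^ 2 \<le> 4 * Qm ^ 2" by simp
    have "S2 ^ 3 \<le> (2 * Qm) ^ 3" using h8 S20 by (intro power_mono) auto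
    then show "S2 ^ 3 \<le> 8 * Qm ^ 3" by simp
  qed
  have Bb: "B \<le> 120 * c * r * Qm ^ 3"
  proof -
    have "Mm * B \<le> Mm * (Dm ^ 2 * S2 * (6 * X + 6 * c * S2))" using h5 Mpos by simp
    also have "\<dots> = r * Mm * S2 * 6 * (Mm * X) + 6 * c * (r * Mm) * Mm * S2 ^ 2"
      using D2 by (simp add: algebra_simps power2_eq_square)
    also have "\<dots> \<le> r * Mm * S2 * 6 * (2 * c * S2 ^ 2) + 6 * c * (r * Mm) * Mm * S2 ^ 2"
      using XB r0 Mpos S20 by (intro add_right_mono mult_left_mono) auto
    also have "\<dots> = Mm * (12 * c * r * S2 ^ 3 + 6 * c * r * Mm * S2 ^ 2)"
      by (simp add: algebra_simps power2_eq_square power3_eq_cube)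
    also have "\<dots> \<le> Mm * (12 * c * r * (8 * Qm ^ 3) + 6 * c * r * Qm * (4 * Qm ^ 2))"
    proof -
      have "12 * c * r * S2 ^ 3 \<le> 12 * c * r * (8 * Qm ^ 3)" using S3Q cpos r0 by (intro mult_left_mono) auto
      moreover have "6 * c * r * Mm * S2 ^ 2 \<le> 6 * c * r * Qm * (4 * Qm ^ 2)"
        using S2Q QM cpos r0 Mpos S20 by (intro mult_mono) auto
      ultimately show ?thesis using Mpos by (intro mult_left_mono) auto
    qed
    also have "\<dots> = Mm * (120 * c * r * Qm ^ 3)" by (simp add: algebra_simps power2_eq_square power3_eq_cube)
    finally show ?thesis using Mpos by simp
  qed
  have MTb: "Qm ^ 3 - 3 * r * Qm ^ 3 \<le> MT"
  proof -
    have "3 * Dm ^ 2 * Qm ^ 2 = 3 * r * Mm * Qm ^ 2" using D2 by simp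
    also have "\<dots> \<le> 3 * r * Qm * Qm ^ 2" using QM r0 by (intro mult_right_mono mult_left_mono) auto
    finally show ?thesis using h7 by (simp add: power2_eq_square power3_eq_cube)
  qed
  have L: "c * Qm ^ 3 * (1 - 123 * r) \<le> T * Mm ^ 3"
  proof -
    have "c * Qm ^ 3 * (1 - 123 * r) = c * (Qm ^ 3 - 3 * r * Qm ^ 3) - 120 * c * r * Qm ^ 3" by (simp add: algebra_simps)
    also have "\<dots> \<le> c * MT - B" using MTb Bb cpos by (intro diff_mono mult_left_mono) auto
    also have "\<dots> \<le> T * Mm ^ 3" using h4 h1 SFR by simp
    finally show ?thesis .
  qed
  show "1 - 123 * (Dm ^ 2 / Mm) \<le> expected_triangles n d / (Qm ^ 3 / (6 * Mm ^ 3))"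
    unfolding ratio r_def[symmetric] using L cpos Qpos by (simp add: field_simps)
qed

end


context gd begin

lemma zero_case: assumes M0: "Mm = 0" shows "expected_triangles n d = 0"
proof -
  have "triangles G = 0" if G: "G \<in> Om" for G
  proof -
    have "(\<Sum>x\<in>V. \<Sum>y\<in>V. of_bool (adj G x y) :: real) = 0" using M_sum[OF G] M0 by simp
    then have "\<forall>x\<in>V. (\<Sum>y\<in>V. of_bool (adj G x y) :: real) = 0"
      by (subst (asm) sum_nonneg_eq_0_iff) (auto intro: sum_nonneg)
    then have "\<forall>x\<in>V. \<forall>y\<in>V. \<not> adj G x y" by (auto simp: sum_nonneg_eq_0_iff)
    then have "tri G = 0" unfolding tri_def by simp
    then show ?thesis using tri_triangles[OF G] by simp
  qed
  then show ?thesis unfolding expected_triangles_def by simp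
qed

end

theorem lemma5:
  fixes d :: "nat \<Rightarrow> nat \<Rightarrow> nat"
  assumes graphical: "\<And>n. graphical n (d n)"
    and small_max: "(\<lambda>n. real (dmax n (d n)) ^ 2) \<in> o(\<lambda>n. real (M1 n (d n)))"
    and M2_ge: "\<And>n. M2 n (d n) \<ge> M1 n (d n)"
  shows "(\<lambda>n. expected_triangles n (d n)) \<sim>[at_top]
         (\<lambda>n. real (M2 n (d n)) ^ 3 / (6 * real (M1 n (d n)) ^ 3))"
proof (rule asymp_equivI)
  define r where "r n = real (dmax n (d n)) ^ 2 / real (M1 n (d n))" for n
  define E where "E n = expected_triangles n (d n)" for n
  define mu where "mu n = real (M2 n (d n)) ^ 3 / (6 * real (M1 n (d n)) ^ 3)" for n
  have r0: "0 \<le> r n" for n unfolding r_def by simp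
  have r_small: "eventually (\<lambda>n. r n \<le> e) at_top" if e: "0 < e" for e
  proof -
    have "eventually (\<lambda>n. norm (real (dmax n (d n)) ^ 2) \<le> e * norm (real (M1 n (d n)))) at_top"
      by (rule landau_o.smallD[OF small_max e])
    then show ?thesis
    proof (rule eventually_mono)
      fix n assume h: "norm (real (dmax n (d n)) ^ 2) \<le> e * norm (real (M1 n (d n)))"
      show "r n \<le> e"
      proof (cases "M1 n (d n) = 0")
        case True then show ?thesis using e unfolding r_def by simp
      next
        case False then show ?thesis using h unfolding r_def by (simp add: field_simps)
      qed
    qed
  qed
  have r_lim: "(r \<longlongrightarrow> 0) at_top"
  proof (rule tendstoI)
    fix e :: real assume e: "0 < e"
    have "eventually (\<lambda>n. r n \<le> e / 2) at_top" using r_small[of "e/2"] e by simp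
    then show "eventually (\<lambda>n. dist (r n) 0 < e) at_top"
      by (rule eventually_mono) (use e r0 in auto)
  qed
  have Llim: "((\<lambda>n. 1 - 123 * r n) \<longlongrightarrow> 1) at_top"
    using tendsto_diff[OF tendsto_const tendsto_mult[OF tendsto_const r_lim], of 1 123] by simp
  have Ulim: "((\<lambda>n. 1 / (1 - 16 * r n) ^ 3) \<longlongrightarrow> 1) at_top"
  proof -
    have "((\<lambda>n. 1 / (1 - 16 * r n) ^ 3) \<longlongrightarrow> 1 / (1 - 16 * 0) ^ 3) at_top"
      by (intro tendsto_intros r_lim) simp_all
    then show ?thesis by simp
  qed
  have bounds: "eventually (\<lambda>n. 1 - 123 * r n \<le> (if E n = 0 \<and> mu n = 0 then 1 else E n / mu n) \<and>
      (if E n = 0 \<and> mu n = 0 then 1 else E n / mu n) \<le> 1 / (1 - 16 * r n) ^ 3) at_top"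
  proof (rule eventually_mono[OF r_small[of "1/100"]])
    show "(0::real) < 1/100" by simp
    fix n assume rn: "r n \<le> 1/100"
    have ne: "graphs_deg n (d n) \<noteq> {}" using graphical[of n] by (simp add: graphical_def)
    show "1 - 123 * r n \<le> (if E n = 0 \<and> mu n = 0 then 1 else E n / mu n) \<and>
      (if E n = 0 \<and> mu n = 0 then 1 else E n / mu n) \<le> 1 / (1 - 16 * r n) ^ 3"
    proof (cases "M1 n (d n) = 0")
      case True
      have "E n = 0" unfolding E_def using gd.zero_case[of n "d n"] True by (simp add: gd.Mm_def)
      moreover have "mu n = 0" unfolding mu_def using True by simp
      moreover have "r n = 0" unfolding r_def using True by simp
      ultimately show ?thesis by simp
    next
      case False
      then have Mpos: "0 < gd.Mm n (d n)" by (simp add: gd.Mm_def)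
      have rr: "gd.Dm n (d n) ^ 2 / gd.Mm n (d n) = r n" unfolding r_def gd.Dm_def gd.Mm_def ..
      have mm: "gd.Qm n (d n) ^ 3 / (6 * gd.Mm n (d n) ^ 3) = mu n" unfolding mu_def gd.Qm_def gd.Mm_def ..
      have b1: "1 - 123 * r n \<le> E n / mu n" and b2: "E n / mu n \<le> 1 / (1 - 16 * r n) ^ 3"
        using gd.main_bound[OF ne M2_ge Mpos] rn unfolding rr mm E_def by auto
      have "mu n \<noteq> 0" unfolding mu_def using False M2_ge[of n] by simp
      then show ?thesis using b1 b2 by simp
    qed
  qed
  have "((\<lambda>n. if E n = 0 \<and> mu n = 0 then 1 else E n / mu n) \<longlongrightarrow> 1) at_top"
    by (rule tendsto_sandwich[OF eventually_mono[OF bounds] eventually_mono[OF bounds] Llim Ulim]) auto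
  then show "((\<lambda>n. if expected_triangles n (d n) = 0 \<and> real (M2 n (d n)) ^ 3 / (6 * real (M1 n (d n)) ^ 3) = 0 then 1
        else expected_triangles n (d n) / (real (M2 n (d n)) ^ 3 / (6 * real (M1 n (d n)) ^ 3))) \<longlongrightarrow> 1) at_top"
    unfolding E_def mu_def .
qed


end
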